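(* Let $N\ge2$, $l\ge1$, $\sigma\in\mathfrak S_{N,l}$, and suppose the Mealy diagram $\mathcal D(\mathsf M_\sigma)$ has $M$ connected components. Then for every $k\ge1$ and every $J\in\{1,\dots,N\}^k$, the representation $P(J)\circ\psi_\sigma$ of $\mathcal O_N$ decomposes as a direct sum $P(J_1)\oplus\cdots\oplus P(J_{M'})$ of cycle representations with $M'\ge M$ summands.
   Context: $\mathcal O_N$ is the Cuntz algebra generated by $s_1,\dots,s_N$ with $s_i^*s_j=\delta_{ij}I$, $\sum_i s_is_i^*=I$; $s_J=s_{j_1}\cdots s_{j_k}$. A representation $(\mathcal H,\pi)$ is $P(J)$, $J=(j_1,\dots,j_k)$, if there is a unit cyclic vector $\Omega$ with $\pi(s_J)\Omega=\Omega$ and $\{\pi(s_{j_i}\cdots s_{j_k})\Omega\}_{i=1}^k$ orthonormal (unique up to unitary equivalence). $\mathfrak S_{N,l}$ is the set of permutations of $\{1,\dots,N\}^l$; $\psi_\sigma$ is the endomorphism with $\psi_\sigma(s_i)=u_\sigma s_i$, $u_\sigma=\sum_{K\in\{1,\dots,N\}^l}s_{\sigma(K)}s_K^*$. Convention $\{1,\dots,N\}^0=\{0\}$. Semi-Mealy machine $\mathsf M_\sigma$: states $Q=\{q_K:K\in\{1,\dots,N\}^{l-1}\}$, inputs $a_1,\dots,a_N$, outputs $b_1,\dots,b_N$; for $l=1$, $\delta(q_0,a_i)=q_0$, $\lambda(q_0,a_i)=b_{\sigma^{-1}(i)}$; for $l\ge2$, writing $\sigma^{-1}(K,i)=(y_1,\dots,y_l)$,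 $\delta(q_K,a_i)=q_{(y_2,\dots,y_l)}$, $\lambda(q_K,a_i)=b_{y_1}$. The Mealy diagram $\mathcal D(\mathsf M_\sigma)$ is the directed graph with vertex set $Q$ and, for each $q\in Q$ and $i$, an edge from $q$ to $\delta(q,a_i)$ labelled $a_i/\lambda(q,a_i)$; connected components are taken ignoring edge directions. *)

theory Defs
  imports "HOL-Analysis.Analysis"
begin

definition l2 :: "('a \<Rightarrow> complex) set" where
  "l2 = {f. (\<lambda>x. (cmod (f x))\<^sup>2) summable_on UNIV}"

definition cinner :: "('a \<Rightarrow> complex) \<Rightarrow> ('a \<Rightarrow> complex) \<Rightarrow> complex" where
  "cinner f g = (\<Sum>\<^sub>\<infinity>x. cnj (f x) * g x)"

definition l2norm :: "('a \<Rightarrow> complex) \<Rightarrow> real" where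
  "l2norm f = sqrt (\<Sum>\<^sub>\<infinity>x. (cmod (f x))\<^sup>2)"

text \<open>Bounded linear operators on l2 (values outside l2 are irrelevant).\<close>
definition is_op :: "(('a \<Rightarrow> complex) \<Rightarrow> ('a \<Rightarrow> complex)) \<Rightarrow> bool" where
  "is_op T \<longleftrightarrow> (\<forall>f\<in>l2. T f \<in> l2)
     \<and> (\<forall>f\<in>l2. \<forall>g\<in>l2. \<forall>c. T (\<lambda>x. f x + c * g x) = (\<lambda>x. T f x + c * T g x))
     \<and> (\<exists>C. \<forall>f\<in>l2. l2norm (T f) \<le> C * l2norm f)"

definition is_adjoint :: "(('a \<Rightarrow> complex) \<Rightarrow> ('a \<Rightarrow> complex)) \<Rightarrow> (('a \<Rightarrow> complex) \<Rightarrow> ('a \<Rightarrow> complex)) \<Rightarrow> bool" where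
  "is_adjoint T A \<longleftrightarrow> is_op T \<and> is_op A \<and> (\<forall>f\<in>l2. \<forall>g\<in>l2. cinner (T f) g = cinner f (A g))"

definition lclosure :: "('a \<Rightarrow> complex) set \<Rightarrow> ('a \<Rightarrow> complex) set" where
  "lclosure A = {f \<in> l2. \<forall>e>0. \<exists>g\<in>A. l2norm (\<lambda>x. f x - g x) < e}"

definition lspan :: "('a \<Rightarrow> complex) set \<Rightarrow> ('a \<Rightarrow> complex) set" where
  "lspan A = {(\<lambda>x. \<Sum>i<n. c i * v i x) | (n::nat) c v. \<forall>i<n. v i \<in> A}"

text \<open>A representation of O_N on l2('a) is given by the images S i of the generators s_i
  (i = 1..N) together with their adjoints Sa i.\<close>
definition cuntz_rep :: "nat \<Rightarrow> (nat \<Rightarrow> ('a \<Rightarrow> complex) \<Rightarrow> ('a \<Rightarrow> complex))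
    \<Rightarrow> (nat \<Rightarrow> ('a \<Rightarrow> complex) \<Rightarrow> ('a \<Rightarrow> complex)) \<Rightarrow> bool" where
  "cuntz_rep N S Sa \<longleftrightarrow>
     (\<forall>i\<in>{1..N}. is_adjoint (S i) (Sa i))
     \<and> (\<forall>i\<in>{1..N}. \<forall>j\<in>{1..N}. \<forall>f\<in>l2. Sa i (S j f) = (if i = j then f else (\<lambda>_. 0)))
     \<and> (\<forall>f\<in>l2. (\<lambda>x. \<Sum>i=1..N. S i (Sa i f) x) = f)"

definition words :: "nat \<Rightarrow> nat \<Rightarrow> nat list set" where
  "words N k = {J. length J = k \<and> set J \<subseteq> {1..N}}"

text \<open>word_op S J = S j_1 o ... o S j_k (i.e. pi(s_J)).\<close>
primrec word_op :: "(nat \<Rightarrow> 'b \<Rightarrow> 'b) \<Rightarrow> nat list \<Rightarrow> 'b \<Rightarrow> 'b" where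
  "word_op S [] = id"
| "word_op S (j # js) = S j \<circ> word_op S js"

text \<open>pi(s_J^* ) = Sa j_k o ... o Sa j_1 = word_op Sa (rev J).\<close>

text \<open>The closed cyclic subspace generated by Omega, i.e. the closure of pi(O_N) Omega,
  O_N being the closed linear span of the s_I s_L^*.\<close>
definition cyclic_space :: "nat \<Rightarrow> (nat \<Rightarrow> ('a \<Rightarrow> complex) \<Rightarrow> ('a \<Rightarrow> complex))
    \<Rightarrow> (nat \<Rightarrow> ('a \<Rightarrow> complex) \<Rightarrow> ('a \<Rightarrow> complex)) \<Rightarrow> ('a \<Rightarrow> complex) \<Rightarrow> ('a \<Rightarrow> complex) set" where
  "cyclic_space N S Sa \<Omega> =
     lclosure (lspan {word_op S I (word_op Sa (rev L) \<Omega>) | I L. set I \<subseteq> {1..N} \<and> set L \<subseteq> {1..N}})"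

text \<open>The subrepresentation on the (invariant, closed) subspace K is P(J): there is a unit
  cyclic vector Omega of K with s_J Omega = Omega and
  {s_{j_i} ... s_{j_k} Omega}_{i=1..k} orthonormal.\<close>
definition is_P :: "nat \<Rightarrow> (nat \<Rightarrow> ('a \<Rightarrow> complex) \<Rightarrow> ('a \<Rightarrow> complex))
    \<Rightarrow> (nat \<Rightarrow> ('a \<Rightarrow> complex) \<Rightarrow> ('a \<Rightarrow> complex)) \<Rightarrow> nat list \<Rightarrow> ('a \<Rightarrow> complex) set \<Rightarrow> bool" where
  "is_P N S Sa J K \<longleftrightarrow>
     (\<exists>\<Omega>\<in>K. l2norm \<Omega> = 1
        \<and> cyclic_space N S Sa \<Omega> = K
        \<and> word_op S J \<Omega> = \<Omega>
        \<and> (\<forall>i\<in>{1..length J}. \<forall>i'\<in>{1..length J}.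
              cinner (word_op S (drop (i - 1) J) \<Omega>) (word_op S (drop (i' - 1) J) \<Omega>)
                = (if i = i' then 1 else 0)))"

definition decomposes_into_cycles :: "nat \<Rightarrow> (nat \<Rightarrow> ('a \<Rightarrow> complex) \<Rightarrow> ('a \<Rightarrow> complex))
    \<Rightarrow> (nat \<Rightarrow> ('a \<Rightarrow> complex) \<Rightarrow> ('a \<Rightarrow> complex)) \<Rightarrow> nat \<Rightarrow> (nat \<Rightarrow> nat list)
    \<Rightarrow> (nat \<Rightarrow> ('a \<Rightarrow> complex) set) \<Rightarrow> bool" where
  "decomposes_into_cycles N S Sa Mn Js Ks \<longleftrightarrow>
     (\<forall>m<Mn. length (Js m) \<ge> 1 \<and> set (Js m) \<subseteq> {1..N} \<and> is_P N S Sa (Js m) (Ks m))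
     \<and> (\<forall>m<Mn. \<forall>m'<Mn. m \<noteq> m' \<longrightarrow> (\<forall>f\<in>Ks m. \<forall>g\<in>Ks m'. cinner f g = 0))
     \<and> (\<forall>f\<in>l2. \<exists>fs. (\<forall>m<Mn. fs m \<in> Ks m) \<and> f = (\<lambda>x. \<Sum>m<Mn. fs m x))"

text \<open>u_sigma = sum_K s_{sigma K} s_K^* and its adjoint; pi o psi_sigma sends s_i to u_sigma S_i.\<close>
definition u_op :: "nat \<Rightarrow> nat \<Rightarrow> (nat list \<Rightarrow> nat list) \<Rightarrow> (nat \<Rightarrow> ('a \<Rightarrow> complex) \<Rightarrow> ('a \<Rightarrow> complex))
    \<Rightarrow> (nat \<Rightarrow> ('a \<Rightarrow> complex) \<Rightarrow> ('a \<Rightarrow> complex)) \<Rightarrow> ('a \<Rightarrow> complex) \<Rightarrow> ('a \<Rightarrow> complex)" where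
  "u_op N l \<sigma> S Sa f = (\<lambda>x. \<Sum>K\<in>words N l. word_op S (\<sigma> K) (word_op Sa (rev K) f) x)"

definition u_adj :: "nat \<Rightarrow> nat \<Rightarrow> (nat list \<Rightarrow> nat list) \<Rightarrow> (nat \<Rightarrow> ('a \<Rightarrow> complex) \<Rightarrow> ('a \<Rightarrow> complex))
    \<Rightarrow> (nat \<Rightarrow> ('a \<Rightarrow> complex) \<Rightarrow> ('a \<Rightarrow> complex)) \<Rightarrow> ('a \<Rightarrow> complex) \<Rightarrow> ('a \<Rightarrow> complex)" where
  "u_adj N l \<sigma> S Sa f = (\<lambda>x. \<Sum>K\<in>words N l. word_op S K (word_op Sa (rev (\<sigma> K)) f) x)"

definition psi_S where
  "psi_S N l \<sigma> S Sa = (\<lambda>i. u_op N l \<sigma> S Sa \<circ> S i)"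

definition psi_Sa where
  "psi_Sa N l \<sigma> S Sa = (\<lambda>i. Sa i \<circ> u_adj N l \<sigma> S Sa)"

text \<open>States q_K, K in {1..N}^(l-1) (for l = 1 the single state q_0 is the empty word).\<close>
definition mealy_states :: "nat \<Rightarrow> nat \<Rightarrow> nat list set" where
  "mealy_states N l = words N (l - 1)"

definition mealy_delta :: "nat \<Rightarrow> nat \<Rightarrow> (nat list \<Rightarrow> nat list) \<Rightarrow> nat list \<Rightarrow> nat \<Rightarrow> nat list" where
  "mealy_delta N l \<sigma> K i = tl (inv_into (words N l) \<sigma> (K @ [i]))"

definition mealy_lambda :: "nat \<Rightarrow> nat \<Rightarrow> (nat list \<Rightarrow> nat list) \<Rightarrow> nat list \<Rightarrow> nat \<Rightarrow> nat" where
  "mealy_lambda N l \<sigma> K i = hd (inv_into (words N l) \<sigma> (K @ [i]))"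

definition mealy_edges :: "nat \<Rightarrow> nat \<Rightarrow> (nat list \<Rightarrow> nat list) \<Rightarrow> (nat list \<times> (nat \<times> nat) \<times> nat list) set" where
  "mealy_edges N l \<sigma> = {(K, (i, mealy_lambda N l \<sigma> K i), mealy_delta N l \<sigma> K i) | K i.
       K \<in> mealy_states N l \<and> i \<in> {1..N}}"

definition mealy_conn :: "nat \<Rightarrow> nat \<Rightarrow> (nat list \<Rightarrow> nat list) \<Rightarrow> nat list rel" where
  "mealy_conn N l \<sigma> =
     (let E = {(q, q'). \<exists>lab. (q, lab, q') \<in> mealy_edges N l \<sigma>}
      in ((E \<union> E\<inverse>)\<^sup>*) \<inter> (mealy_states N l \<times> mealy_states N l))"

definition mealy_num_components :: "nat \<Rightarrow> nat \<Rightarrow> (nat list \<Rightarrow> nat list) \<Rightarrow> nat" where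
  "mealy_num_components N l \<sigma> = card (mealy_states N l // mealy_conn N l \<sigma>)"

end

theory Submission
  imports Defs
begin

definition nf :: "('a \<Rightarrow> complex) \<Rightarrow> real" where
  "nf f = (\<Sum>\<^sub>\<infinity>x. (cmod (f x))\<^sup>2)"

lemma l2_iff: "f \<in> l2 \<longleftrightarrow> (\<lambda>x. (cmod (f x))\<^sup>2) summable_on UNIV"
  by (simp add: l2_def)

lemma nf_nonneg: "nf f \<ge> 0"
  unfolding nf_def by (rule infsum_nonneg) auto

lemma l2norm_nf: "l2norm f = sqrt (nf f)"
  by (simp add: l2norm_def nf_def)

lemma l2norm_sq: "(l2norm f)\<^sup>2 = nf f"
  by (simp add: l2norm_nf nf_nonneg)

lemma sq_sum_le: "((x::real) + y)\<^sup>2 \<le> 2 * x\<^sup>2 + 2 * y\<^sup>2"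
proof -
  have "(x + y)\<^sup>2 = 2 * x\<^sup>2 + 2 * y\<^sup>2 - (x - y)\<^sup>2" by (simp add: power2_eq_square algebra_simps)
  moreover have "0 \<le> (x - y)\<^sup>2" by simp
  ultimately show ?thesis by linarith
qed

lemma prod_le_sq2: "2 * ((x::real) * y) \<le> x\<^sup>2 + y\<^sup>2"
proof -
  have "2 * (x * y) = x\<^sup>2 + y\<^sup>2 - (x - y)\<^sup>2" by (simp add: power2_eq_square algebra_simps)
  moreover have "0 \<le> (x - y)\<^sup>2" "0 \<le> x\<^sup>2" "0 \<le> y\<^sup>2" by simp_all
  ultimately show ?thesis by linarith
qed

lemma prod_le_sq: "0 \<le> x \<Longrightarrow> 0 \<le> y \<Longrightarrow> (x::real) * y \<le> x\<^sup>2 + y\<^sup>2"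
  using prod_le_sq2[of x y] by (smt (verit) mult_nonneg_nonneg)

lemma sq_bound: "(cmod (a + c * b))\<^sup>2 \<le> 2 * (cmod a)\<^sup>2 + 2 * ((cmod c)\<^sup>2 * (cmod b)\<^sup>2)"
proof -
  have "cmod (a + c * b) \<le> cmod a + cmod c * cmod b"
    by (metis norm_mult norm_triangle_ineq)
  hence "(cmod (a + c * b))\<^sup>2 \<le> (cmod a + cmod c * cmod b)\<^sup>2"
    by (simp add: power_mono)
  also have "\<dots> \<le> 2 * (cmod a)\<^sup>2 + 2 * (cmod c * cmod b)\<^sup>2"
    by (rule sq_sum_le)
  finally show ?thesis by (simp add: power_mult_distrib)
qed

lemma l2_lin: 
  assumes "f \<in> l2" "g \<in> l2" shows "(\<lambda>x. f x + c * g x) \<in> l2"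
proof -
  have "(\<lambda>x. 2 * (cmod (f x))\<^sup>2 + 2 * ((cmod c)\<^sup>2 * (cmod (g x))\<^sup>2)) summable_on UNIV"
    using assms unfolding l2_iff
    by (intro summable_on_add summable_on_cmult_right) auto
  thus ?thesis unfolding l2_iff
    by (rule summable_on_comparison_test) (auto intro: sq_bound)
qed

lemma l2_zero[simp]: "(\<lambda>_. 0) \<in> l2"
  by (simp add: l2_iff)

lemma l2_add: "f \<in> l2 \<Longrightarrow> g \<in> l2 \<Longrightarrow> (\<lambda>x. f x + g x) \<in> l2"
  using l2_lin[of f g 1] by simp

lemma l2_scale: "g \<in> l2 \<Longrightarrow> (\<lambda>x. c * g x) \<in> l2"
  using l2_lin[of "\<lambda>_. 0" g c] by simp

lemma l2_diff: "f \<in> l2 \<Longrightarrow> g \<in> l2 \<Longrightarrow> (\<lambda>x. f x - g x) \<in> l2"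
  using l2_lin[of f g "-1"] by simp

lemma l2_sum: "finite I \<Longrightarrow> (\<And>i. i \<in> I \<Longrightarrow> g i \<in> l2) \<Longrightarrow> (\<lambda>x. \<Sum>i\<in>I. g i x) \<in> l2"
  by (induction I rule: finite_induct) (auto intro: l2_add)

lemma cinner_summable:
  assumes "f \<in> l2" "g \<in> l2" shows "(\<lambda>x. cnj (f x) * g x) summable_on UNIV"
proof -
  have s: "(\<lambda>x. (cmod (f x))\<^sup>2 + (cmod (g x))\<^sup>2) summable_on UNIV"
    using assms by (simp add: l2_iff summable_on_add)
  have "(\<lambda>x. norm (cnj (f x) * g x)) summable_on UNIV"
  proof (rule summable_on_comparison_test[OF s])
    fix x
    show "norm (cnj (f x) * g x) \<le> (cmod (f x))\<^sup>2 + (cmod (g x))\<^sup>2"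
      using prod_le_sq[of "cmod (f x)" "cmod (g x)"] by (simp add: norm_mult)
  qed auto
  thus ?thesis by (simp add: summable_on_iff_abs_summable_on_complex)
qed

lemma cinner_commute: "cinner g f = cnj (cinner f g)"
  unfolding cinner_def infsum_cnj[symmetric] by (simp add: mult.commute)

lemma cinner_add_right:
  assumes "f \<in> l2" "g \<in> l2" "h \<in> l2"
  shows "cinner f (\<lambda>x. g x + h x) = cinner f g + cinner f h"
  unfolding cinner_def using cinner_summable[OF assms(1,2)] cinner_summable[OF assms(1,3)]
  by (simp add: distrib_left infsum_add)

lemma cinner_scale_right:
  shows "cinner f (\<lambda>x. c * g x) = c * cinner f g"
  unfolding cinner_def
  by (simp add: infsum_cmult_right' mult.left_commute)

lemma cinner_scale_left:
  shows "cinner (\<lambda>x. c * g x) f = cnj c * cinner g f"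
proof -
  have "cinner (\<lambda>x. c * g x) f = cnj (cinner f (\<lambda>x. c * g x))" by (rule cinner_commute)
  also have "\<dots> = cnj c * cnj (cinner f g)" by (simp add: cinner_scale_right)
  also have "cnj (cinner f g) = cinner g f" by (rule cinner_commute[symmetric])
  finally show ?thesis .
qed

lemma cinner_add_left:
  assumes "f \<in> l2" "g \<in> l2" "h \<in> l2"
  shows "cinner (\<lambda>x. g x + h x) f = cinner g f + cinner h f"
proof -
  have "cinner (\<lambda>x. g x + h x) f = cnj (cinner f (\<lambda>x. g x + h x))" by (rule cinner_commute)
  also have "\<dots> = cnj (cinner f g) + cnj (cinner f h)" by (simp add: cinner_add_right assms)
  also have "cnj (cinner f g) = cinner g f" by (rule cinner_commute[symmetric])
  also have "cnj (cinner f h) = cinner h f" by (rule cinner_commute[symmetric])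
  finally show ?thesis .
qed

lemma cinner_zero_right[simp]: "cinner f (\<lambda>_. 0) = 0"
  by (simp add: cinner_def)

lemma cinner_zero_left[simp]: "cinner (\<lambda>_. 0) f = 0"
  by (simp add: cinner_def)

lemma cinner_sum_right:
  assumes "finite I" "f \<in> l2" "\<And>i. i \<in> I \<Longrightarrow> g i \<in> l2"
  shows "cinner f (\<lambda>x. \<Sum>i\<in>I. g i x) = (\<Sum>i\<in>I. cinner f (g i))"
  using assms(1,3)
proof (induction I rule: finite_induct)
  case empty then show ?case by simp
next
  case (insert a I)
  have "cinner f (\<lambda>x. \<Sum>i\<in>insert a I. g i x) = cinner f (\<lambda>x. g a x + (\<Sum>i\<in>I. g i x))"
    using insert by simp
  also have "\<dots> = cinner f (g a) + cinner f (\<lambda>x. \<Sum>i\<in>I. g i x)"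
    using insert assms(2) by (intro cinner_add_right l2_sum) auto
  finally show ?case using insert by simp
qed

lemma cinner_sum_left:
  assumes "finite I" "f \<in> l2" "\<And>i. i \<in> I \<Longrightarrow> g i \<in> l2"
  shows "cinner (\<lambda>x. \<Sum>i\<in>I. g i x) f = (\<Sum>i\<in>I. cinner (g i) f)"
proof -
  have "cinner (\<lambda>x. \<Sum>i\<in>I. g i x) f = cnj (cinner f (\<lambda>x. \<Sum>i\<in>I. g i x))"
    by (rule cinner_commute)
  also have "\<dots> = cnj (\<Sum>i\<in>I. cinner f (g i))" using cinner_sum_right[OF assms] by simp
  also have "\<dots> = (\<Sum>i\<in>I. cnj (cinner f (g i)))" by simp
  also have "\<dots> = (\<Sum>i\<in>I. cinner (g i) f)"
    by (rule sum.cong) (auto intro: cinner_commute[symmetric])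
  finally show ?thesis .
qed

lemma cinner_self: "cinner f f = complex_of_real (nf f)"
proof -
  have "cinner f f = (\<Sum>\<^sub>\<infinity>x. complex_of_real ((cmod (f x))\<^sup>2))"
  proof -
    have eq: "\<And>z. cnj z * z = complex_of_real ((cmod z)\<^sup>2)"
      by (metis complex_norm_square mult.commute)
    show ?thesis unfolding cinner_def by (simp only: eq)
  qed
  also have "\<dots> = complex_of_real (nf f)"
  proof (cases "(\<lambda>x. (cmod (f x))\<^sup>2) summable_on UNIV")
    case True
    then show ?thesis unfolding nf_def
      by (metis has_sum_infsum has_sum_of_real infsumI)
  next
    case False
    hence "\<not> (\<lambda>x. complex_of_real ((cmod (f x))\<^sup>2)) summable_on UNIV"
      using summable_on_Re[of "\<lambda>x. complex_of_real ((cmod (f x))\<^sup>2)"] by auto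
    then show ?thesis using False unfolding nf_def by (simp add: infsum_not_exists)
  qed
  finally show ?thesis .
qed

lemma nf_eq0:
  assumes "f \<in> l2" "nf f = 0" shows "f = (\<lambda>_. 0)"
proof
  fix x
  have "(cmod (f x))\<^sup>2 = 0"
    using assms unfolding nf_def l2_iff
    by (intro nonneg_infsum_le_0D[where A=UNIV]) auto
  thus "f x = 0" by simp
qed

lemma sum_le_nf:
  assumes "f \<in> l2" "finite X" shows "(\<Sum>x\<in>X. (cmod (f x))\<^sup>2) \<le> nf f"
  using assms unfolding nf_def l2_iff by (intro finite_sum_le_infsum) auto

lemma pointwise_le_nf:
  assumes "f \<in> l2" shows "(cmod (f x))\<^sup>2 \<le> nf f"
  using sum_le_nf[OF assms, of "{x}"] by simp

lemma nf_bound: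
  assumes "\<And>X. finite X \<Longrightarrow> (\<Sum>x\<in>X. (cmod (f x))\<^sup>2) \<le> C"
  shows "f \<in> l2" "nf f \<le> C"
proof -
  have "bdd_above (sum (\<lambda>x. (cmod (f x))\<^sup>2) ` {F. F \<subseteq> UNIV \<and> finite F})"
    using assms by (auto intro!: bdd_aboveI2)
  hence s: "(\<lambda>x. (cmod (f x))\<^sup>2) summable_on UNIV"
    by (intro nonneg_bdd_above_summable_on) auto
  thus "f \<in> l2" by (simp add: l2_iff)
  show "nf f \<le> C" unfolding nf_def using s assms by (intro infsum_le_finite_sums) auto
qed

lemma nf_add_le:
  assumes "f \<in> l2" "g \<in> l2"
  shows "nf (\<lambda>x. f x + g x) \<le> 2 * nf f + 2 * nf g"
proof -
  have s1: "(\<lambda>x. (cmod (f x + g x))\<^sup>2) summable_on UNIV"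
    using l2_add[OF assms] by (simp add: l2_iff)
  have s2: "(\<lambda>x. 2 * (cmod (f x))\<^sup>2 + 2 * (cmod (g x))\<^sup>2) summable_on UNIV"
    using assms by (simp add: l2_iff summable_on_add summable_on_cmult_right)
  have "nf (\<lambda>x. f x + g x) \<le> (\<Sum>\<^sub>\<infinity>x. 2 * (cmod (f x))\<^sup>2 + 2 * (cmod (g x))\<^sup>2)"
    unfolding nf_def
  proof (rule infsum_mono[OF s1 s2])
    fix x show "(cmod (f x + g x))\<^sup>2 \<le> 2 * (cmod (f x))\<^sup>2 + 2 * (cmod (g x))\<^sup>2"
      using sq_bound[of "f x" 1 "g x"] by simp
  qed
  also have "\<dots> = 2 * nf f + 2 * nf g"
    using assms unfolding nf_def l2_iff
    by (simp add: infsum_add infsum_cmult_right summable_on_cmult_right)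
  finally show ?thesis .
qed

lemma infsum_lin2:
  fixes F G :: "'a \<Rightarrow> real"
  assumes "F summable_on UNIV" "G summable_on UNIV"
  shows "(\<Sum>\<^sub>\<infinity>x. C * (p * F x + q * G x)) = C * (p * infsum F UNIV + q * infsum G UNIV)"
proof -
  have "(\<Sum>\<^sub>\<infinity>x. C * (p * F x + q * G x)) = C * (\<Sum>\<^sub>\<infinity>x. p * F x + q * G x)"
    by (rule infsum_cmult_right')
  also have "(\<Sum>\<^sub>\<infinity>x. p * F x + q * G x) = (\<Sum>\<^sub>\<infinity>x. p * F x) + (\<Sum>\<^sub>\<infinity>x. q * G x)"
    by (rule infsum_add) (auto intro: summable_on_cmult_right assms)
  also have "(\<Sum>\<^sub>\<infinity>x. p * F x) = p * infsum F UNIV" by (rule infsum_cmult_right')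
  also have "(\<Sum>\<^sub>\<infinity>x. q * G x) = q * infsum G UNIV" by (rule infsum_cmult_right')
  finally show ?thesis .
qed

lemma cauchy_schwarz:
  assumes "f \<in> l2" "g \<in> l2"
  shows "cmod (cinner f g) \<le> l2norm f * l2norm g"
proof (cases "nf f = 0 \<or> nf g = 0")
  case True
  then show ?thesis using nf_eq0[OF assms(1)] nf_eq0[OF assms(2)]
    by (auto simp: l2norm_nf)
next
  case False
  define a where "a = l2norm f"
  define b where "b = l2norm g"
  have a2: "a\<^sup>2 = nf f" and b2: "b\<^sup>2 = nf g" unfolding a_def b_def by (simp_all add: l2norm_sq)
  have apos: "a > 0" and bpos: "b > 0" using False nf_nonneg[of f] nf_nonneg[of g]
    unfolding a_def b_def l2norm_nf by auto
  have abs: "(\<lambda>x. norm (cnj (f x) * g x)) summable_on UNIV"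
    using cinner_summable[OF assms] summable_on_iff_abs_summable_on_complex[of "\<lambda>x. cnj (f x) * g x" UNIV]
    by simp
  have s2: "(\<lambda>x. (a * b / 2) * ((1 / a\<^sup>2) * (cmod (f x))\<^sup>2 + (1 / b\<^sup>2) * (cmod (g x))\<^sup>2)) summable_on UNIV"
    using assms unfolding l2_iff
    by (intro summable_on_cmult_right summable_on_add) auto
  have "cmod (cinner f g) \<le> (\<Sum>\<^sub>\<infinity>x. norm (cnj (f x) * g x))"
    unfolding cinner_def using abs by (rule norm_infsum_bound)
  also have "\<dots> \<le> (\<Sum>\<^sub>\<infinity>x. (a * b / 2) * ((1 / a\<^sup>2) * (cmod (f x))\<^sup>2 + (1 / b\<^sup>2) * (cmod (g x))\<^sup>2))"
  proof (rule infsum_mono[OF abs s2])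
    fix x
    have "2 * ((cmod (f x) / a) * (cmod (g x) / b)) \<le> (cmod (f x) / a)\<^sup>2 + (cmod (g x) / b)\<^sup>2"
      by (rule prod_le_sq2)
    hence "(a * b / 2) * (2 * ((cmod (f x) / a) * (cmod (g x) / b))) \<le> (a * b / 2) * ((cmod (f x) / a)\<^sup>2 + (cmod (g x) / b)\<^sup>2)"
      using apos bpos by (intro mult_left_mono) auto
    thus "norm (cnj (f x) * g x) \<le> (a * b / 2) * ((1 / a\<^sup>2) * (cmod (f x))\<^sup>2 + (1 / b\<^sup>2) * (cmod (g x))\<^sup>2)"
      using apos bpos by (simp add: norm_mult power_divide field_simps)
  qed
  also have "\<dots> = (a * b / 2) * ((1 / a\<^sup>2) * nf f + (1 / b\<^sup>2) * nf g)"
    using assms unfolding l2_iff nf_def by (rule infsum_lin2)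
  also have "\<dots> = a * b" using a2 b2 apos bpos by (simp flip: a2 b2)
  finally show ?thesis unfolding a_def b_def .
qed


lemma lspan_iff: "f \<in> lspan A \<longleftrightarrow> (\<exists>(n::nat) c v. f = (\<lambda>x. \<Sum>i<n. c i * v i x) \<and> (\<forall>i<n. v i \<in> A))"
  unfolding lspan_def by auto

lemma l2norm_nonneg: "l2norm f \<ge> 0"
  by (simp add: l2norm_nf nf_nonneg)

lemma lspan_l2: "A \<subseteq> l2 \<Longrightarrow> lspan A \<subseteq> l2"
  unfolding lspan_def by (auto intro!: l2_sum l2_scale)

lemma lspan_mono: assumes "A \<subseteq> A'" shows "lspan A \<subseteq> lspan A'"
proof
  fix f assume "f \<in> lspan A"
  then obtain n :: nat and c v where "f = (\<lambda>x. \<Sum>i<n. c i * v i x)" "\<forall>i<n. v i \<in> A"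
    unfolding lspan_iff by blast
  then show "f \<in> lspan A'" unfolding lspan_iff using assms by blast
qed

lemma lspan_zero: "(\<lambda>_. 0) \<in> lspan A"
  unfolding lspan_def by (rule CollectI, rule exI[of _ 0]) auto

lemma lspan_base: "a \<in> A \<Longrightarrow> a \<in> lspan A"
  unfolding lspan_def
  by (rule CollectI, rule exI[of _ 1], rule exI[of _ "\<lambda>_. 1"], rule exI[of _ "\<lambda>_. a"]) auto

lemma lspan_add:
  assumes "f \<in> lspan A" "g \<in> lspan A" shows "(\<lambda>x. f x + g x) \<in> lspan A"
proof -
  obtain n :: nat and c v where f: "f = (\<lambda>x. \<Sum>i<n. c i * v i x)" "\<forall>i<n. v i \<in> A"
    using assms(1) unfolding lspan_iff by blast
  obtain n' :: nat and c' v' where g: "g = (\<lambda>x. \<Sum>i<n'. c' i * v' i x)" "\<forall>i<n'. v' i \<in> A"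
    using assms(2) unfolding lspan_iff by blast
  define C where "C i = (if i < n then c i else c' (i - n))" for i
  define V where "V i = (if i < n then v i else v' (i - n))" for i
  have "(\<lambda>x. f x + g x) = (\<lambda>x. \<Sum>i<n + n'. C i * V i x)"
  proof
    fix x
    have "(\<Sum>i<n + n'. C i * V i x) = (\<Sum>i<n. C i * V i x) + (\<Sum>i\<in>{n..<n+n'}. C i * V i x)"
      by (simp add: lessThan_atLeast0 sum.atLeastLessThan_concat)
    also have "(\<Sum>i<n. C i * V i x) = f x" unfolding f C_def V_def by simp
    also have "(\<Sum>i\<in>{n..<n+n'}. C i * V i x) = (\<Sum>i<n'. C (i + n) * V (i + n) x)"
      using sum.shift_bounds_nat_ivl[of "\<lambda>i. C i * V i x" 0 n n'] by (simp add: lessThan_atLeast0 add.commute)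
    also have "\<dots> = g x" unfolding g C_def V_def by simp
    finally show "f x + g x = (\<Sum>i<n + n'. C i * V i x)" by simp
  qed
  moreover have "\<forall>i<n + n'. V i \<in> A" using f g unfolding V_def by auto
  ultimately show ?thesis unfolding lspan_iff by blast
qed

lemma lspan_scale:
  assumes "f \<in> lspan A" shows "(\<lambda>x. c * f x) \<in> lspan A"
proof -
  obtain n :: nat and d v where f: "f = (\<lambda>x. \<Sum>i<n. d i * v i x)" "\<forall>i<n. v i \<in> A"
    using assms(1) unfolding lspan_iff by blast
  have "(\<lambda>x. c * f x) = (\<lambda>x. \<Sum>i<n. (c * d i) * v i x)"
    unfolding f by (simp add: sum_distrib_left mult.assoc)
  thus ?thesis using f unfolding lspan_iff by (intro exI[of _ n] exI[of _ "\<lambda>i. c * d i"] exI[of _ v]) simp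
qed

lemma lspan_diff:
  assumes "f \<in> lspan A" "g \<in> lspan A" shows "(\<lambda>x. f x - g x) \<in> lspan A"
  using lspan_add[OF assms(1) lspan_scale[OF assms(2), of "-1"]] by simp

lemma lspan_sum_closed:
  assumes "finite I" "\<And>i. i \<in> I \<Longrightarrow> v i \<in> lspan A"
  shows "(\<lambda>x. \<Sum>i\<in>I. c i * v i x) \<in> lspan A"
  using assms
proof (induction I rule: finite_induct)
  case empty then show ?case by (simp add: lspan_zero)
next
  case (insert a I)
  then show ?case using lspan_add[OF lspan_scale[of "v a" A "c a"], of "\<lambda>x. \<Sum>i\<in>I. c i * v i x"]
    by simp
qed

lemma lspan_lspan: "lspan (lspan A) \<subseteq> lspan A"
  using lspan_sum_closed[of "{..<_}"] unfolding lspan_def[of "lspan A"] by auto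

lemma lspan_insert0: "lspan (insert (\<lambda>_. 0) A) = lspan A"
proof
  show "lspan (insert (\<lambda>_. 0) A) \<subseteq> lspan A"
    using lspan_mono[of "insert (\<lambda>_. 0) A" "lspan A"] lspan_lspan[of A] lspan_zero[of A] lspan_base[of _ A]
    by blast
  show "lspan A \<subseteq> lspan (insert (\<lambda>_. 0) A)" by (rule lspan_mono) auto
qed

lemma lspan_between: "A \<subseteq> G \<Longrightarrow> G \<subseteq> insert (\<lambda>_. 0) A \<Longrightarrow> lspan G = lspan A"
  using lspan_mono lspan_insert0 by (metis subset_antisym)

lemma lspan_orth:
  assumes "A \<subseteq> l2" "A' \<subseteq> l2" "\<And>a b. a \<in> A \<Longrightarrow> b \<in> A' \<Longrightarrow> cinner a b = 0"
    and "f \<in> lspan A" "g \<in> lspan A'"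
  shows "cinner f g = 0"
proof -
  obtain n :: nat and c v where f: "f = (\<lambda>x. \<Sum>i<n. c i * v i x)" "\<forall>i<n. v i \<in> A"
    using assms(4) unfolding lspan_iff by blast
  obtain n' :: nat and c' v' where g: "g = (\<lambda>x. \<Sum>i<n'. c' i * v' i x)" "\<forall>i<n'. v' i \<in> A'"
    using assms(5) unfolding lspan_iff by blast
  have gl2: "g \<in> l2" using lspan_l2[OF assms(2)] assms(5) by blast
  have "cinner f g = (\<Sum>i<n. cinner (\<lambda>x. c i * v i x) g)"
    unfolding f(1) using f(2) gl2 assms(1) by (intro cinner_sum_left) (auto intro!: l2_scale)
  also have "\<dots> = (\<Sum>i<n. cnj (c i) * cinner (v i) g)" by (simp add: cinner_scale_left)
  also have "\<dots> = 0"
  proof (rule sum.neutral, rule ballI)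
    fix i assume i: "i \<in> {..<n}"
    have "cinner (v i) g = (\<Sum>j<n'. cinner (v i) (\<lambda>x. c' j * v' j x))"
      unfolding g(1) using g(2) i f(2) assms(1,2) by (intro cinner_sum_right) (auto intro!: l2_scale)
    also have "\<dots> = 0" using i f(2) g(2) assms(3) by (simp add: cinner_scale_right)
    finally show "cnj (c i) * cinner (v i) g = 0" by simp
  qed
  finally show ?thesis .
qed

lemma small_le:
  fixes x C :: real
  assumes "\<And>e. e > 0 \<Longrightarrow> x \<le> C * e" "C \<ge> 0"
  shows "x \<le> 0"
proof (rule ccontr)
  assume "\<not> x \<le> 0"
  hence x: "x > 0" by simp
  have "x \<le> C * (x / (C + 1))" using assms(1)[of "x / (C + 1)"] x assms(2) by simp
  also have "\<dots> < x" using x assms(2) by (simp add: field_simps)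
  finally show False by simp
qed

lemma lclosure_l2: "lclosure A \<subseteq> l2"
  unfolding lclosure_def by auto

lemma lclosure_orth:
  assumes "A \<subseteq> l2" "A' \<subseteq> l2" "\<And>a b. a \<in> A \<Longrightarrow> b \<in> A' \<Longrightarrow> cinner a b = 0"
    and "f \<in> lclosure (lspan A)" "g \<in> lclosure (lspan A')"
  shows "cinner f g = 0"
proof -
  have fl2: "f \<in> l2" and gl2: "g \<in> l2" using assms(4,5) unfolding lclosure_def by auto
  have step1: "cinner a g = 0" if a: "a \<in> lspan A" for a
  proof -
    have al2: "a \<in> l2" using a lspan_l2[OF assms(1)] by blast
    have "cmod (cinner a g) \<le> l2norm a * e" if e: "e > 0" for e
    proof -
      obtain b where b: "b \<in> lspan A'" "l2norm (\<lambda>x. g x - b x) < e"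
        using assms(5) e unfolding lclosure_def by blast
      have bl2: "b \<in> l2" using b lspan_l2[OF assms(2)] by blast
      have "cinner a g = cinner a (\<lambda>x. b x + (g x - b x))" by simp
      also have "\<dots> = cinner a b + cinner a (\<lambda>x. g x - b x)"
        using al2 bl2 gl2 by (intro cinner_add_right l2_diff)
      also have "cinner a b = 0" using lspan_orth[OF assms(1,2,3) a b(1)] .
      finally have "cmod (cinner a g) = cmod (cinner a (\<lambda>x. g x - b x))" by simp
      also have "\<dots> \<le> l2norm a * l2norm (\<lambda>x. g x - b x)"
        by (rule cauchy_schwarz[OF al2 l2_diff[OF gl2 bl2]])
      also have "\<dots> \<le> l2norm a * e" using b(2) by (intro mult_left_mono) (auto simp: l2norm_nonneg)
      finally show ?thesis .
    qed
    hence "cmod (cinner a g) \<le> 0" by (intro small_le) (auto simp: l2norm_nonneg)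
    thus ?thesis by simp
  qed
  have "cmod (cinner f g) \<le> l2norm g * e" if e: "e > 0" for e
  proof -
    obtain a where a: "a \<in> lspan A" "l2norm (\<lambda>x. f x - a x) < e"
      using assms(4) e unfolding lclosure_def by blast
    have al2: "a \<in> l2" using a lspan_l2[OF assms(1)] by blast
    have "cinner f g = cinner (\<lambda>x. a x + (f x - a x)) g" by simp
    also have "\<dots> = cinner a g + cinner (\<lambda>x. f x - a x) g"
      using al2 fl2 gl2 by (intro cinner_add_left l2_diff)
    also have "cinner a g = 0" using step1[OF a(1)] .
    finally have "cmod (cinner f g) = cmod (cinner (\<lambda>x. f x - a x) g)" by simp
    also have "\<dots> \<le> l2norm (\<lambda>x. f x - a x) * l2norm g"
      by (rule cauchy_schwarz[OF l2_diff[OF fl2 al2] gl2])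
    also have "\<dots> \<le> e * l2norm g" using a(2) by (intro mult_right_mono) (auto simp: l2norm_nonneg)
    finally show ?thesis by (simp add: mult.commute)
  qed
  hence "cmod (cinner f g) \<le> 0" by (intro small_le) (auto simp: l2norm_nonneg)
  thus ?thesis by simp
qed


lemma split_lspan:
  fixes M :: nat
  assumes "g \<in> lspan (\<Union>m<M. A m)"
  shows "\<exists>gs. (\<forall>m<M. gs m \<in> lspan (A m)) \<and> g = (\<lambda>x. \<Sum>m<M. gs m x)"
proof -
  obtain n :: nat and c v where g: "g = (\<lambda>x. \<Sum>i<n. c i * v i x)" "\<forall>i<n. v i \<in> (\<Union>m<M. A m)"
    using assms unfolding lspan_iff by blast
  have "\<forall>i. \<exists>m. i < n \<longrightarrow> m < M \<and> v i \<in> A m" using g(2) by blast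
  then obtain mi where mi: "\<And>i. i < n \<Longrightarrow> mi i < M \<and> v i \<in> A (mi i)" by metis
  define gs where "gs m = (\<lambda>x. \<Sum>i\<in>{i\<in>{..<n}. mi i = m}. c i * v i x)" for m
  have "gs m \<in> lspan (A m)" if "m < M" for m
    unfolding gs_def by (rule lspan_sum_closed) (auto intro: lspan_base dest: mi)
  moreover have "g = (\<lambda>x. \<Sum>m<M. gs m x)"
  proof
    fix x
    have "(\<Sum>m<M. gs m x) = (\<Sum>i<n. c i * v i x)"
      unfolding gs_def by (rule sum.group) (auto dest: mi)
    thus "g x = (\<Sum>m<M. gs m x)" unfolding g by simp
  qed
  ultimately show ?thesis by blast
qed

lemma pyth:
  fixes M :: nat
  assumes l2: "\<And>m. m < M \<Longrightarrow> A m \<subseteq> l2"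
    and orth: "\<And>m m' a b. m < M \<Longrightarrow> m' < M \<Longrightarrow> m \<noteq> m' \<Longrightarrow> a \<in> A m \<Longrightarrow> b \<in> A m' \<Longrightarrow> cinner a b = 0"
    and hs: "\<And>m. m < M \<Longrightarrow> hs m \<in> lspan (A m)"
  shows "nf (\<lambda>x. \<Sum>m<M. hs m x) = (\<Sum>m<M. nf (hs m))"
proof -
  have hl2: "hs m \<in> l2" if "m < M" for m using hs[OF that] lspan_l2[OF l2[OF that]] by blast
  have sl2: "(\<lambda>x. \<Sum>m<M. hs m x) \<in> l2" by (rule l2_sum) (auto intro: hl2)
  have "complex_of_real (nf (\<lambda>x. \<Sum>m<M. hs m x)) = cinner (\<lambda>x. \<Sum>m<M. hs m x) (\<lambda>x. \<Sum>m<M. hs m x)"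
    by (simp add: cinner_self)
  also have "\<dots> = (\<Sum>m<M. cinner (hs m) (\<lambda>x. \<Sum>m<M. hs m x))"
    by (rule cinner_sum_left) (auto intro: hl2 sl2)
  also have "\<dots> = (\<Sum>m<M. (\<Sum>m'<M. cinner (hs m) (hs m')))"
    by (rule sum.cong[OF refl], rule cinner_sum_right) (auto intro: hl2)
  also have "\<dots> = (\<Sum>m<M. cinner (hs m) (hs m))"
  proof (rule sum.cong[OF refl])
    fix m assume m: "m \<in> {..<M}"
    have "(\<Sum>m'<M. cinner (hs m) (hs m')) = (\<Sum>m'<M. if m' = m then cinner (hs m) (hs m) else 0)"
    proof (rule sum.cong[OF refl])
      fix m' assume m': "m' \<in> {..<M}"
      show "cinner (hs m) (hs m') = (if m' = m then cinner (hs m) (hs m) else 0)"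
      proof (cases "m' = m")
        case False
        have "cinner (hs m) (hs m') = 0"
          by (rule lspan_orth[of "A m" "A m'"]) (use l2 orth hs m m' False in auto)
        thus ?thesis using False by simp
      qed simp
    qed
    also have "\<dots> = cinner (hs m) (hs m)" using m by (simp add: sum.delta)
    finally show "(\<Sum>m'<M. cinner (hs m) (hs m')) = cinner (hs m) (hs m)" .
  qed
  also have "\<dots> = complex_of_real (\<Sum>m<M. nf (hs m))" by (simp add: cinner_self)
  finally show ?thesis using of_real_eq_iff by blast
qed

lemma nf_minus: "nf (\<lambda>x. g x - f x) = nf (\<lambda>x. f x - g x)"
  unfolding nf_def by (simp add: norm_minus_commute)

lemma decomp:
  fixes A :: "nat \<Rightarrow> ('a \<Rightarrow> complex) set" and M :: nat
  assumes l2: "\<And>m. m < M \<Longrightarrow> A m \<subseteq> l2"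
    and orth: "\<And>m m' a b. m < M \<Longrightarrow> m' < M \<Longrightarrow> m \<noteq> m' \<Longrightarrow> a \<in> A m \<Longrightarrow> b \<in> A m' \<Longrightarrow> cinner a b = 0"
    and f: "f \<in> lclosure (lspan (\<Union>m<M. A m))"
  shows "\<exists>fs. (\<forall>m<M. fs m \<in> lclosure (lspan (A m))) \<and> f = (\<lambda>x. \<Sum>m<M. fs m x)"
proof -
  define \<epsilon> :: "nat \<Rightarrow> real" where "\<epsilon> n = 1 / (real n + 1)" for n
  have \<epsilon>pos: "\<epsilon> n > 0" for n unfolding \<epsilon>_def by simp
  have \<epsilon>mono: "\<epsilon> n \<le> \<epsilon> N" if "N \<le> n" for n N unfolding \<epsilon>_def using that by (simp add: frac_le)
  have \<epsilon>small: "\<exists>N. \<epsilon> N < e" if "e > 0" for e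
  proof -
    obtain N :: nat where "real N > 1 / e" using reals_Archimedean2 by blast
    hence "1 / (real N + 1) < e" using that by (simp add: field_simps)
    thus ?thesis unfolding \<epsilon>_def by blast
  qed
  have fl2: "f \<in> l2" using f unfolding lclosure_def by auto
  have "\<exists>gs. (\<forall>m<M. gs m \<in> lspan (A m)) \<and> nf (\<lambda>x. f x - (\<Sum>m<M. gs m x)) < (\<epsilon> n)\<^sup>2" for n
  proof -
    obtain g where g: "g \<in> lspan (\<Union>m<M. A m)" "l2norm (\<lambda>x. f x - g x) < \<epsilon> n"
      using f \<epsilon>pos unfolding lclosure_def by blast
    obtain gs where gs: "\<forall>m<M. gs m \<in> lspan (A m)" "g = (\<lambda>x. \<Sum>m<M. gs m x)"
      using split_lspan[OF g(1)] by blast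
    have "nf (\<lambda>x. f x - g x) < (\<epsilon> n)\<^sup>2"
      using g(2) l2norm_nonneg[of "\<lambda>x. f x - g x"] unfolding l2norm_sq[symmetric]
      by (simp add: power_strict_mono)
    thus ?thesis using gs by blast
  qed
  then obtain G where G: "\<And>n m. m < M \<Longrightarrow> G n m \<in> lspan (A m)"
     "\<And>n. nf (\<lambda>x. f x - (\<Sum>m<M. G n m x)) < (\<epsilon> n)\<^sup>2"
    by metis
  define g where "g n = (\<lambda>x. \<Sum>m<M. G n m x)" for n
  have Gl2: "G n m \<in> l2" if "m < M" for n m using G(1)[OF that] lspan_l2[OF l2[OF that]] by blast
  have gl2: "g n \<in> l2" for n unfolding g_def by (rule l2_sum) (auto intro: Gl2)
  have fg: "nf (\<lambda>x. f x - g n x) < (\<epsilon> n)\<^sup>2" for n using G(2) unfolding g_def by simp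
  have bound: "nf (\<lambda>x. G n m x - G p m x) \<le> 2 * (\<epsilon> n)\<^sup>2 + 2 * (\<epsilon> p)\<^sup>2" if m: "m < M" for n p m
  proof -
    have "nf (\<lambda>x. G n m x - G p m x) \<le> (\<Sum>m'<M. nf (\<lambda>x. G n m' x - G p m' x))"
      using m by (intro member_le_sum) (auto simp: nf_nonneg)
    also have "\<dots> = nf (\<lambda>x. \<Sum>m'<M. G n m' x - G p m' x)"
      by (rule pyth[symmetric, OF l2 orth]) (auto intro: lspan_diff G(1))
    also have "(\<lambda>x. \<Sum>m'<M. G n m' x - G p m' x) = (\<lambda>x. (g n x - f x) + (f x - g p x))"
      unfolding g_def by (simp add: sum_subtractf)
    also have "nf \<dots> \<le> 2 * nf (\<lambda>x. g n x - f x) + 2 * nf (\<lambda>x. f x - g p x)"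
      by (rule nf_add_le) (auto intro: l2_diff gl2 fl2)
    also have "\<dots> \<le> 2 * (\<epsilon> n)\<^sup>2 + 2 * (\<epsilon> p)\<^sup>2"
      using fg[of n] fg[of p] nf_minus[of "g n" f] by simp
    finally show ?thesis .
  qed
  have bound2: "nf (\<lambda>x. G n m x - G p m x) \<le> 4 * (\<epsilon> N)\<^sup>2" if "m < M" "N \<le> n" "N \<le> p" for n p m N
  proof -
    have "(\<epsilon> n)\<^sup>2 \<le> (\<epsilon> N)\<^sup>2" "(\<epsilon> p)\<^sup>2 \<le> (\<epsilon> N)\<^sup>2"
      using \<epsilon>mono[OF that(2)] \<epsilon>mono[OF that(3)] \<epsilon>pos by (auto intro: power_mono less_imp_le)
    thus ?thesis using bound[OF that(1), of n p] by linarith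
  qed
  have cauchy: "Cauchy (\<lambda>n. G n m x)" if m: "m < M" for m x
  proof (rule metric_CauchyI)
    fix e :: real assume e: "e > 0"
    obtain N where N: "\<epsilon> N < e / 2" using \<epsilon>small[of "e/2"] e by auto
    show "\<exists>K. \<forall>n\<ge>K. \<forall>p\<ge>K. dist (G n m x) (G p m x) < e"
    proof (intro exI allI impI)
      fix n p assume "N \<le> n" "N \<le> p"
      have "(cmod (G n m x - G p m x))\<^sup>2 \<le> nf (\<lambda>x. G n m x - G p m x)"
        by (rule pointwise_le_nf) (auto intro: l2_diff Gl2 m)
      also have "\<dots> \<le> 4 * (\<epsilon> N)\<^sup>2" using bound2 m \<open>N \<le> n\<close> \<open>N \<le> p\<close> by blast
      also have "\<dots> = (2 * \<epsilon> N)\<^sup>2" by (simp add: power_mult_distrib)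
      also have "\<dots> < e\<^sup>2" using N \<epsilon>pos[of N] by (intro power_strict_mono) auto
      finally have "(cmod (G n m x - G p m x))\<^sup>2 < e\<^sup>2" .
      hence "cmod (G n m x - G p m x) < e" using e by (simp add: power_less_imp_less_base)
      thus "dist (G n m x) (G p m x) < e" by (simp add: dist_norm)
    qed
  qed
  define fs where "fs m = (\<lambda>x. lim (\<lambda>n. G n m x))" for m
  have lim: "(\<lambda>n. G n m x) \<longlonglongrightarrow> fs m x" if "m < M" for m x
    unfolding fs_def using cauchy[OF that] by (simp add: Cauchy_convergent_iff convergent_LIMSEQ_iff)
  have fsbound: "(\<lambda>x. fs m x - G n m x) \<in> l2 \<and> nf (\<lambda>x. fs m x - G n m x) \<le> 4 * (\<epsilon> n)\<^sup>2"
    if m: "m < M" for m n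
  proof -
    have "(\<Sum>x\<in>X. (cmod (fs m x - G n m x))\<^sup>2) \<le> 4 * (\<epsilon> n)\<^sup>2" if X: "finite X" for X
    proof (rule LIMSEQ_le_const2)
      show "(\<lambda>p. \<Sum>x\<in>X. (cmod (G p m x - G n m x))\<^sup>2) \<longlonglongrightarrow> (\<Sum>x\<in>X. (cmod (fs m x - G n m x))\<^sup>2)"
        by (intro tendsto_intros lim m)
      show "\<exists>N. \<forall>p\<ge>N. (\<Sum>x\<in>X. (cmod (G p m x - G n m x))\<^sup>2) \<le> 4 * (\<epsilon> n)\<^sup>2"
      proof (intro exI allI impI)
        fix p assume p: "n \<le> p"
        have "(\<Sum>x\<in>X. (cmod (G p m x - G n m x))\<^sup>2) \<le> nf (\<lambda>x. G p m x - G n m x)"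
          by (rule sum_le_nf) (auto intro: l2_diff Gl2 m X)
        also have "\<dots> \<le> 4 * (\<epsilon> n)\<^sup>2" by (rule bound2[OF m p order.refl])
        finally show "(\<Sum>x\<in>X. (cmod (G p m x - G n m x))\<^sup>2) \<le> 4 * (\<epsilon> n)\<^sup>2" .
      qed
    qed
    thus ?thesis using nf_bound[of "\<lambda>x. fs m x - G n m x"] by blast
  qed
  have fsl2: "fs m \<in> l2" if m: "m < M" for m
    using l2_add[OF conjunct1[OF fsbound[OF m, of 0]] Gl2[OF m, of 0]] by simp
  have fscl: "fs m \<in> lclosure (lspan (A m))" if m: "m < M" for m
    unfolding lclosure_def
  proof (intro CollectI conjI allI impI fsl2[OF m])
    fix e :: real assume e: "e > 0"
    obtain n where n: "\<epsilon> n < e / 2" using \<epsilon>small[of "e/2"] e by auto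
    have "l2norm (\<lambda>x. fs m x - G n m x) = sqrt (nf (\<lambda>x. fs m x - G n m x))" by (rule l2norm_nf)
    also have "\<dots> \<le> sqrt ((2 * \<epsilon> n)\<^sup>2)" using fsbound[OF m, of n] by (simp add: power_mult_distrib)
    also have "\<dots> = 2 * \<epsilon> n" using \<epsilon>pos[of n] by (intro real_sqrt_unique) auto
    also have "\<dots> < e" using n by simp
    finally show "\<exists>g\<in>lspan (A m). l2norm (\<lambda>x. fs m x - g x) < e" using G(1)[OF m] by blast
  qed
  have "f = (\<lambda>x. \<Sum>m<M. fs m x)"
  proof
    fix x
    have t1: "(\<lambda>n. g n x) \<longlonglongrightarrow> (\<Sum>m<M. fs m x)"
      unfolding g_def by (intro tendsto_sum lim) simp
    have t2: "(\<lambda>n. g n x) \<longlonglongrightarrow> f x"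
    proof (rule LIMSEQ_I)
      fix r :: real assume r: "r > 0"
      obtain N where N: "\<epsilon> N < r" using \<epsilon>small r by blast
      show "\<exists>no. \<forall>n\<ge>no. norm (g n x - f x) < r"
      proof (intro exI allI impI)
        fix n assume n: "N \<le> n"
        have "(cmod (f x - g n x))\<^sup>2 \<le> nf (\<lambda>x. f x - g n x)"
          by (rule pointwise_le_nf) (auto intro: l2_diff gl2 fl2)
        also have "\<dots> < (\<epsilon> n)\<^sup>2" by (rule fg)
        finally have "cmod (f x - g n x) < \<epsilon> n" using \<epsilon>pos[of n]
          by (simp add: power_less_imp_less_base)
        also have "\<dots> \<le> \<epsilon> N" using \<epsilon>mono[OF n] .
        finally show "norm (g n x - f x) < r" using N by (simp add: norm_minus_commute)
      qed
    qed
    show "f x = (\<Sum>m<M. fs m x)" using LIMSEQ_unique[OF t2 t1] .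
  qed
  thus ?thesis using fscl by blast
qed


lemma word_op_append: "word_op S (xs @ ys) = word_op S xs \<circ> word_op S ys"
  by (induction xs) auto

lemma finite_words: "finite (words N n)"
proof -
  have "words N n = {xs. set xs \<subseteq> {1..N} \<and> length xs = n}" unfolding words_def by auto
  thus ?thesis using finite_lists_length_eq[of "{1..N}" n] by simp
qed

lemma lclosure_base: "g \<in> l2 \<Longrightarrow> g \<in> A \<Longrightarrow> g \<in> lclosure A"
  unfolding lclosure_def by (auto intro!: bexI[of _ g] simp: l2norm_def)

lemma lclosure_mono: "A \<subseteq> A' \<Longrightarrow> lclosure A \<subseteq> lclosure A'"
  unfolding lclosure_def by blast

lemma op_zero:
  assumes "is_op T" shows "T (\<lambda>_. 0) = (\<lambda>_. 0)"
proof -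
  from assms have lin: "\<forall>f\<in>l2. \<forall>g\<in>l2. \<forall>c. T (\<lambda>x. f x + c * g x) = (\<lambda>x. T f x + c * T g x)"
    by (simp add: is_op_def)
  have "T (\<lambda>_. 0) = (\<lambda>x. T (\<lambda>_. 0) x + T (\<lambda>_. 0) x)"
    using lin[rule_format, OF l2_zero l2_zero, of 1] by simp
  hence "\<And>x. T (\<lambda>_. 0) x = T (\<lambda>_. 0) x + T (\<lambda>_. 0) x" by metis
  thus ?thesis by auto
qed

locale cyc =
  fixes N l :: nat and \<sigma> :: "nat list \<Rightarrow> nat list"
    and S Sa :: "nat \<Rightarrow> ('a \<Rightarrow> complex) \<Rightarrow> ('a \<Rightarrow> complex)"
    and J :: "nat list" and k :: nat and \<Omega> :: "'a \<Rightarrow> complex"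
  assumes l1: "l \<ge> 1"
    and bij: "bij_betw \<sigma> (words N l) (words N l)"
    and k1: "k \<ge> 1" and J: "J \<in> words N k"
    and rep: "cuntz_rep N S Sa"
    and \<Omega>l2: "\<Omega> \<in> l2" and cyc: "cyclic_space N S Sa \<Omega> = l2" and fixJ: "word_op S J \<Omega> = \<Omega>"
    and orthn: "\<forall>i\<in>{1..length J}. \<forall>i'\<in>{1..length J}.
              cinner (word_op S (drop (i - 1) J) \<Omega>) (word_op S (drop (i' - 1) J) \<Omega>)
                = (if i = i' then 1 else 0)"
begin

lemma lenJ: "length J = k" and setJ: "set J \<subseteq> {1..N}" using J unfolding words_def by auto

lemma S_op: "i \<in> {1..N} \<Longrightarrow> is_op (S i)" and Sa_op: "i \<in> {1..N} \<Longrightarrow> is_op (Sa i)"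
  using rep unfolding cuntz_rep_def is_adjoint_def by auto

lemma S_l2: "i \<in> {1..N} \<Longrightarrow> f \<in> l2 \<Longrightarrow> S i f \<in> l2"
  using S_op unfolding is_op_def by blast

lemma Sa_l2: "i \<in> {1..N} \<Longrightarrow> f \<in> l2 \<Longrightarrow> Sa i f \<in> l2"
  using Sa_op unfolding is_op_def by blast

lemma S_zero: "i \<in> {1..N} \<Longrightarrow> S i (\<lambda>_. 0) = (\<lambda>_. 0)" using op_zero S_op by blast
lemma Sa_zero: "i \<in> {1..N} \<Longrightarrow> Sa i (\<lambda>_. 0) = (\<lambda>_. 0)" using op_zero Sa_op by blast

lemma Sa_S: "i \<in> {1..N} \<Longrightarrow> j \<in> {1..N} \<Longrightarrow> f \<in> l2 \<Longrightarrow> Sa i (S j f) = (if i = j then f else (\<lambda>_. 0))"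
  using rep unfolding cuntz_rep_def by blast

lemma adj: "i \<in> {1..N} \<Longrightarrow> f \<in> l2 \<Longrightarrow> g \<in> l2 \<Longrightarrow> cinner (S i f) g = cinner f (Sa i g)"
  using rep unfolding cuntz_rep_def is_adjoint_def by blast

lemma cinner_SS:
  assumes "i \<in> {1..N}" "j \<in> {1..N}" "f \<in> l2" "g \<in> l2"
  shows "cinner (S i f) (S j g) = (if i = j then cinner f g else 0)"
  using adj[OF assms(1,3) S_l2[OF assms(2,4)]] Sa_S[OF assms(1,2,4)] by simp

lemma wS_l2: "set W \<subseteq> {1..N} \<Longrightarrow> f \<in> l2 \<Longrightarrow> word_op S W f \<in> l2"
  by (induction W) (auto intro: S_l2)

lemma wSa_l2: "set W \<subseteq> {1..N} \<Longrightarrow> f \<in> l2 \<Longrightarrow> word_op Sa W f \<in> l2"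
  by (induction W) (auto intro: Sa_l2)

lemma wS_zero: "set W \<subseteq> {1..N} \<Longrightarrow> word_op S W (\<lambda>_. 0) = (\<lambda>_. 0)"
  by (induction W) (auto simp: S_zero)

lemma wSa_zero: "set W \<subseteq> {1..N} \<Longrightarrow> word_op Sa W (\<lambda>_. 0) = (\<lambda>_. 0)"
  by (induction W) (auto simp: Sa_zero)

definition om :: "nat \<Rightarrow> 'a \<Rightarrow> complex" where
  "om c = word_op S (drop c J) \<Omega>"

lemma om0: "om 0 = \<Omega>" unfolding om_def using fixJ by simp

lemma om_l2: "om c \<in> l2"
  unfolding om_def using setJ by (intro wS_l2 \<Omega>l2) (meson order_trans set_drop_subset)

definition nxt :: "nat \<Rightarrow> nat" where "nxt c = (if Suc c < k then Suc c else 0)"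

lemma nxt_lt: "nxt c < k" unfolding nxt_def using k1 by auto

lemma Jc: "c < k \<Longrightarrow> J ! c \<in> {1..N}" using setJ lenJ by (metis nth_mem subsetD)

lemma om_step: assumes "c < k" shows "om c = S (J ! c) (om (nxt c))"
proof -
  have d: "drop c J = J ! c # drop (Suc c) J" using assms lenJ by (simp add: Cons_nth_drop_Suc)
  show ?thesis
  proof (cases "Suc c < k")
    case True then show ?thesis unfolding om_def nxt_def d by simp
  next
    case False
    hence "drop (Suc c) J = []" using lenJ by simp
    then show ?thesis using False unfolding om_def nxt_def d by (simp add: fixJ)
  qed
qed

lemma om_orth: assumes "c < k" "c' < k" shows "cinner (om c) (om c') = (if c = c' then 1 else 0)"
proof -
  have "cinner (word_op S (drop (Suc c - 1) J) \<Omega>) (word_op S (drop (Suc c' - 1) J) \<Omega>) = (if Suc c = Suc c' then 1 else 0)"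
    using orthn[rule_format, of "Suc c" "Suc c'"] assms lenJ by auto
  thus ?thesis unfolding om_def by simp
qed

definition B :: "('a \<Rightarrow> complex) set" where
  "B = {word_op S W (om c) | W c. set W \<subseteq> {1..N} \<and> c < k}"

lemma B_l2: "b \<in> B \<Longrightarrow> b \<in> l2"
  unfolding B_def using wS_l2 om_l2 by blast

lemma om_B: "c < k \<Longrightarrow> om c \<in> B"
  unfolding B_def by (auto intro!: exI[of _ "[]"])

lemma B_intro: "set W \<subseteq> {1..N} \<Longrightarrow> c < k \<Longrightarrow> word_op S W (om c) \<in> B"
  unfolding B_def by blast

lemma S_B: assumes "i \<in> {1..N}" "b \<in> B" shows "S i b \<in> B"
proof -
  obtain W c where b: "b = word_op S W (om c)" "set W \<subseteq> {1..N}" "c < k"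
    using assms unfolding B_def by blast
  have "S i b = word_op S (i # W) (om c)" using b by simp
  also have "\<dots> \<in> B" using b assms by (intro B_intro) auto
  finally show ?thesis .
qed

lemma wS_B: "set W \<subseteq> {1..N} \<Longrightarrow> b \<in> B \<Longrightarrow> word_op S W b \<in> B"
  by (induction W) (auto intro: S_B)

lemma B_dec: assumes "b \<in> B" shows "\<exists>i\<in>{1..N}. \<exists>b'\<in>B. b = S i b'"
proof -
  obtain W c where b: "b = word_op S W (om c)" "set W \<subseteq> {1..N}" "c < k"
    using assms unfolding B_def by blast
  show ?thesis
  proof (cases W)
    case Nil
    have "J ! c \<in> {1..N}" "om (nxt c) \<in> B" "b = S (J ! c) (om (nxt c))"
      using b om_step[OF b(3)] Jc[OF b(3)] om_B[OF nxt_lt] Nil by auto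
    then show ?thesis by blast
  next
    case (Cons w W')
    have "w \<in> {1..N}" "b = S w (word_op S W' (om c))" using b Cons by auto
    moreover have "word_op S W' (om c) \<in> B" by (rule B_intro) (use b Cons in auto)
    ultimately show ?thesis by blast
  qed
qed

lemma cinner_S_self: "i \<in> {1..N} \<Longrightarrow> f \<in> l2 \<Longrightarrow> cinner (S i f) (S i f) = cinner f f"
  using cinner_SS by simp

lemma B_norm: assumes "b \<in> B" shows "cinner b b = 1"
proof -
  obtain W c where b: "b = word_op S W (om c)" "set W \<subseteq> {1..N}" "c < k"
    using assms unfolding B_def by blast
  have "cinner (word_op S W (om c)) (word_op S W (om c)) = 1" using b(2)
    by (induction W) (auto simp: om_orth[OF b(3) b(3)] cinner_S_self wS_l2 om_l2)
  thus ?thesis using b by simp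
qed

lemma B_nz: "b \<in> B \<Longrightarrow> b \<noteq> (\<lambda>_. 0)"
  using B_norm by fastforce

lemma O1: "set W' \<subseteq> {1..N} \<Longrightarrow> c < k \<Longrightarrow> c' < k \<Longrightarrow>
   cinner (om c) (word_op S W' (om c')) = 0 \<or> om c = word_op S W' (om c')"
proof (induction W' arbitrary: c)
  case Nil then show ?case using om_orth by auto
next
  case (Cons w W'')
  have X: "word_op S W'' (om c') \<in> l2" by (rule wS_l2) (use Cons.prems om_l2 in auto)
  have "cinner (om c) (word_op S (w # W'') (om c')) = cinner (S (J ! c) (om (nxt c))) (S w (word_op S W'' (om c')))"
    using om_step[OF Cons(3)] by simp
  also have "\<dots> = (if J ! c = w then cinner (om (nxt c)) (word_op S W'' (om c')) else 0)"
    using Cons Jc X by (intro cinner_SS) (auto intro: om_l2)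
  finally have eq: "cinner (om c) (word_op S (w # W'') (om c')) = \<dots>" .
  show ?case
  proof (cases "J ! c = w")
    case True
    from Cons.IH[of "nxt c"] Cons.prems nxt_lt
    have "cinner (om (nxt c)) (word_op S W'' (om c')) = 0 \<or> om (nxt c) = word_op S W'' (om c')" by auto
    then show ?thesis using eq True om_step[OF Cons(3)] by auto
  qed (use eq in auto)
qed

lemma O2: "set W \<subseteq> {1..N} \<Longrightarrow> set W' \<subseteq> {1..N} \<Longrightarrow> c < k \<Longrightarrow> c' < k \<Longrightarrow>
   cinner (word_op S W (om c)) (word_op S W' (om c')) = 0 \<or> word_op S W (om c) = word_op S W' (om c')"
proof (induction W arbitrary: W')
  case Nil then show ?case using O1 by simp
next
  case (Cons w V)
  show ?case
  proof (cases W')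
    case Nil
    have "cinner (om c') (word_op S (w # V) (om c)) = 0 \<or> om c' = word_op S (w # V) (om c)"
      using O1 Cons.prems by blast
    then show ?thesis using Nil cinner_commute[of "word_op S (w # V) (om c)" "om c'"] by auto
  next
    case (Cons w' V')
    have l: "word_op S V (om c) \<in> l2" "word_op S V' (om c') \<in> l2"
      by (rule wS_l2, use Cons.prems Cons om_l2 in auto)+
    have eq: "cinner (word_op S (w # V) (om c)) (word_op S W' (om c')) =
        (if w = w' then cinner (word_op S V (om c)) (word_op S V' (om c')) else 0)"
      using Cons Cons.prems l by (simp add: cinner_SS)
    show ?thesis
    proof (cases "w = w'")
      case True
      have "cinner (word_op S V (om c)) (word_op S V' (om c')) = 0 \<or> word_op S V (om c) = word_op S V' (om c')"
        using Cons.IH Cons.prems Cons by auto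
      then show ?thesis using eq True Cons by auto
    qed (use eq in auto)
  qed
qed

lemma B_orth: assumes "b \<in> B" "b' \<in> B" "b \<noteq> b'" shows "cinner b b' = 0"
  using assms O2 unfolding B_def by blast

lemma B_on: "b \<in> B \<Longrightarrow> b' \<in> B \<Longrightarrow> cinner b b' = (if b = b' then 1 else 0)"
  using B_orth B_norm by auto

end

context cyc begin

definition fl :: "('a \<Rightarrow> complex) \<Rightarrow> nat" where
  "fl b = (SOME i. i \<in> {1..N} \<and> (\<exists>b'\<in>B. b = S i b'))"

definition pred :: "('a \<Rightarrow> complex) \<Rightarrow> ('a \<Rightarrow> complex)" where
  "pred b = (SOME b'. b' \<in> B \<and> b = S (fl b) b')"

lemma fl_pred: assumes "b \<in> B" shows "fl b \<in> {1..N}" "pred b \<in> B" "b = S (fl b) (pred b)"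
proof -
  have ex1: "\<exists>i. i \<in> {1..N} \<and> (\<exists>b'\<in>B. b = S i b')" using B_dec[OF assms] by blast
  have h1: "fl b \<in> {1..N} \<and> (\<exists>b'\<in>B. b = S (fl b) b')" unfolding fl_def by (rule someI_ex[OF ex1])
  have ex2: "\<exists>b'. b' \<in> B \<and> b = S (fl b) b'" using h1 by blast
  have h2: "pred b \<in> B \<and> b = S (fl b) (pred b)" unfolding pred_def by (rule someI_ex[OF ex2])
  show "fl b \<in> {1..N}" "pred b \<in> B" "b = S (fl b) (pred b)" using h1 h2 by auto
qed

lemma Sa_B: assumes "b \<in> B" "i \<in> {1..N}" shows "Sa i b = (if i = fl b then pred b else (\<lambda>_. 0))"
  using Sa_S[OF assms(2) fl_pred(1)[OF assms(1)] B_l2[OF fl_pred(2)[OF assms(1)]]] fl_pred(3)[OF assms(1)]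
  by simp

lemma S_fl_pred: assumes "i \<in> {1..N}" "b \<in> B" shows "fl (S i b) = i" "pred (S i b) = b"
proof -
  have sb: "S i b \<in> B" using S_B assms by blast
  have "Sa i (S i b) = b" using Sa_S[OF assms(1) assms(1) B_l2[OF assms(2)]] by simp
  moreover have "Sa i (S i b) = (if i = fl (S i b) then pred (S i b) else (\<lambda>_. 0))"
    using Sa_B[OF sb assms(1)] .
  ultimately show "fl (S i b) = i" "pred (S i b) = b" using B_nz[OF assms(2)] by (auto split: if_splits)
qed

fun fw :: "nat \<Rightarrow> ('a \<Rightarrow> complex) \<Rightarrow> nat list" where
  "fw 0 b = []"
| "fw (Suc n) b = fl b # fw n (pred b)"

abbreviation predn :: "nat \<Rightarrow> ('a \<Rightarrow> complex) \<Rightarrow> ('a \<Rightarrow> complex)" where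
  "predn n \<equiv> pred ^^ n"

lemma predn_B: "b \<in> B \<Longrightarrow> predn n b \<in> B"
  by (induction n) (auto intro: fl_pred)

lemma fw_words: "b \<in> B \<Longrightarrow> fw n b \<in> words N n"
  by (induction n arbitrary: b) (auto simp: words_def dest: fl_pred)

lemma fw_len: "length (fw n b) = n" by (induction n arbitrary: b) auto

lemma fw_set: "b \<in> B \<Longrightarrow> set (fw n b) \<subseteq> {1..N}"
  using fw_words unfolding words_def by blast

lemma recon: "b \<in> B \<Longrightarrow> word_op S (fw n b) (predn n b) = b"
proof (induction n arbitrary: b)
  case 0 then show ?case by simp
next
  case (Suc n)
  have "word_op S (fw (Suc n) b) (predn (Suc n) b) = S (fl b) (word_op S (fw n (pred b)) (predn n (pred b)))"
    by (simp add: funpow_Suc_right del: funpow.simps)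
  also have "\<dots> = S (fl b) (pred b)" using Suc fl_pred by simp
  also have "\<dots> = b" using fl_pred Suc by simp
  finally show ?case .
qed

lemma fw_S: "set W \<subseteq> {1..N} \<Longrightarrow> b \<in> B \<Longrightarrow> fw (length W + m) (word_op S W b) = W @ fw m b"
  by (induction W) (auto simp: S_fl_pred wS_B)

lemma fw_S': "set W \<subseteq> {1..N} \<Longrightarrow> b \<in> B \<Longrightarrow> fw (length W) (word_op S W b) = W"
  using fw_S[of W b 0] by simp

lemma predn_S: "set W \<subseteq> {1..N} \<Longrightarrow> b \<in> B \<Longrightarrow> predn (length W) (word_op S W b) = b"
  by (induction W) (auto simp: S_fl_pred wS_B funpow_Suc_right simp del: funpow.simps)

lemma fw_snoc: "fw (Suc n) b = fw n b @ [fl (predn n b)]"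
  by (induction n arbitrary: b) (auto simp: funpow_Suc_right simp del: funpow.simps)

lemma Sa_word: "b \<in> B \<Longrightarrow> K \<in> words N n \<Longrightarrow>
   word_op Sa (rev K) b = (if K = fw n b then predn n b else (\<lambda>_. 0))"
proof (induction K arbitrary: b n)
  case Nil then show ?case by (simp add: words_def)
next
  case (Cons a K)
  then obtain n' where n: "n = Suc n'" and K: "K \<in> words N n'" and a: "a \<in> {1..N}"
    by (cases n) (auto simp: words_def)
  have e: "word_op Sa (rev (a # K)) b = word_op Sa (rev K) (Sa a b)"
    by (simp add: word_op_append)
  have sa: "Sa a b = (if a = fl b then pred b else (\<lambda>_. 0))" using Sa_B[OF Cons.prems(1) a] .
  show ?case
  proof (cases "a = fl b")
    case True
    have "word_op Sa (rev (a # K)) b = word_op Sa (rev K) (pred b)" using e sa True by simp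
    also have "\<dots> = (if K = fw n' (pred b) then predn n' (pred b) else (\<lambda>_. 0))"
      using Cons.IH[OF fl_pred(2)[OF Cons.prems(1)] K] .
    also have "\<dots> = (if a # K = fw n b then predn n b else (\<lambda>_. 0))"
      using True n by (simp add: funpow_Suc_right del: funpow.simps)
    finally show ?thesis .
  next
    case False
    have "set (rev K) \<subseteq> {1..N}" using K by (simp add: words_def)
    then show ?thesis using False e sa n by (simp add: wSa_zero)
  qed
qed

lemma wSa_B: "b \<in> B \<Longrightarrow> set L \<subseteq> {1..N} \<Longrightarrow> word_op Sa L b \<in> insert (\<lambda>_. 0) B"
proof (induction L arbitrary: b rule: rev_induct)
  case Nil then show ?case by simp
next
  case (snoc a L)
  have e: "word_op Sa (L @ [a]) b = word_op Sa L (Sa a b)" by (simp add: word_op_append)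
  have a: "a \<in> {1..N}" and L: "set L \<subseteq> {1..N}" using snoc.prems by auto
  show ?case
  proof (cases "a = fl b")
    case True
    then show ?thesis using e Sa_B[OF snoc.prems(1) a] snoc.IH[OF fl_pred(2)[OF snoc.prems(1)] L] by simp
  next
    case False
    then show ?thesis using e Sa_B[OF snoc.prems(1) a] wSa_zero[OF L] by simp
  qed
qed

definition sig' :: "nat list \<Rightarrow> nat list" where "sig' = inv_into (words N l) \<sigma>"

lemma sig_w: "K \<in> words N l \<Longrightarrow> \<sigma> K \<in> words N l" by (rule bij_betw_apply[OF bij])
lemma sig'_w: "K \<in> words N l \<Longrightarrow> sig' K \<in> words N l"
  unfolding sig'_def by (rule bij_betw_apply[OF bij_betw_inv_into[OF bij]])
lemma sig_sig': "K \<in> words N l \<Longrightarrow> \<sigma> (sig' K) = K"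
  unfolding sig'_def by (rule bij_betw_inv_into_right[OF bij])
lemma sig'_sig: "K \<in> words N l \<Longrightarrow> sig' (\<sigma> K) = K"
  unfolding sig'_def by (rule bij_betw_inv_into_left[OF bij])

lemma words_set: "K \<in> words N n \<Longrightarrow> set K \<subseteq> {1..N}" and words_len: "K \<in> words N n \<Longrightarrow> length K = n"
  unfolding words_def by auto

definition U where "U b = word_op S (\<sigma> (fw l b)) (predn l b)"
definition U' where "U' b = word_op S (sig' (fw l b)) (predn l b)"

lemma U_B: "b \<in> B \<Longrightarrow> U b \<in> B"
  unfolding U_def by (intro wS_B predn_B words_set[OF sig_w] fw_words)
lemma U'_B: "b \<in> B \<Longrightarrow> U' b \<in> B"
  unfolding U'_def by (intro wS_B predn_B words_set[OF sig'_w] fw_words)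

lemma fw_U: assumes "b \<in> B" shows "fw l (U b) = \<sigma> (fw l b)"
proof -
  have w: "\<sigma> (fw l b) \<in> words N l" by (rule sig_w[OF fw_words[OF assms]])
  show ?thesis using fw_S'[OF words_set[OF w] predn_B[OF assms]] words_len[OF w] unfolding U_def by simp
qed
lemma fw_U': assumes "b \<in> B" shows "fw l (U' b) = sig' (fw l b)"
proof -
  have w: "sig' (fw l b) \<in> words N l" by (rule sig'_w[OF fw_words[OF assms]])
  show ?thesis using fw_S'[OF words_set[OF w] predn_B[OF assms]] words_len[OF w] unfolding U'_def by simp
qed
lemma predn_U: assumes "b \<in> B" shows "predn l (U b) = predn l b"
proof -
  have w: "\<sigma> (fw l b) \<in> words N l" by (rule sig_w[OF fw_words[OF assms]])
  show ?thesis using predn_S[OF words_set[OF w] predn_B[OF assms]] words_len[OF w] unfolding U_def by simp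
qed
lemma predn_U': assumes "b \<in> B" shows "predn l (U' b) = predn l b"
proof -
  have w: "sig' (fw l b) \<in> words N l" by (rule sig'_w[OF fw_words[OF assms]])
  show ?thesis using predn_S[OF words_set[OF w] predn_B[OF assms]] words_len[OF w] unfolding U'_def by simp
qed

lemma U'_U: "b \<in> B \<Longrightarrow> U' (U b) = b"
  unfolding U'_def using fw_U predn_U sig'_sig[OF fw_words] recon U_B by simp
lemma U_U': "b \<in> B \<Longrightarrow> U (U' b) = b"
  unfolding U_def using fw_U' predn_U' sig_sig'[OF fw_words] recon U'_B by simp

lemma u_op_B: assumes "b \<in> B" shows "u_op N l \<sigma> S Sa b = U b"
proof
  fix x
  have "u_op N l \<sigma> S Sa b x = (\<Sum>K\<in>words N l. word_op S (\<sigma> K) (word_op Sa (rev K) b) x)"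
    unfolding u_op_def by simp
  also have "\<dots> = (\<Sum>K\<in>words N l. if K = fw l b then word_op S (\<sigma> K) (predn l b) x else 0)"
    by (rule sum.cong) (auto simp: Sa_word[OF assms] wS_zero[OF words_set[OF sig_w]])
  also have "\<dots> = U b x" unfolding U_def using fw_words[OF assms] finite_words by simp
  finally show "u_op N l \<sigma> S Sa b x = U b x" .
qed

lemma u_adj_B: assumes "b \<in> B" shows "u_adj N l \<sigma> S Sa b = U' b"
proof
  fix x
  have "u_adj N l \<sigma> S Sa b x = (\<Sum>K\<in>words N l. word_op S K (word_op Sa (rev (\<sigma> K)) b) x)"
    unfolding u_adj_def by simp
  also have "\<dots> = (\<Sum>K\<in>words N l. if K = sig' (fw l b) then word_op S K (predn l b) x else 0)"
  proof (rule sum.cong[OF refl])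
    fix K assume K: "K \<in> words N l"
    have iff: "\<sigma> K = fw l b \<longleftrightarrow> K = sig' (fw l b)"
      using sig'_sig[OF K] sig_sig'[OF fw_words[OF assms]] by auto
    show "word_op S K (word_op Sa (rev (\<sigma> K)) b) x = (if K = sig' (fw l b) then word_op S K (predn l b) x else 0)"
      using Sa_word[OF assms sig_w[OF K]] iff wS_zero[OF words_set[OF K]] by auto
  qed
  also have "\<dots> = U' b x" unfolding U'_def using sig'_w[OF fw_words[OF assms]] finite_words by simp
  finally show "u_adj N l \<sigma> S Sa b x = U' b x" .
qed

lemma u_op_0: "u_op N l \<sigma> S Sa (\<lambda>_. 0) = (\<lambda>_. 0)"
proof
  fix x
  have "word_op S (\<sigma> K) (word_op Sa (rev K) (\<lambda>_. 0)) x = 0" if K: "K \<in> words N l" for K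
  proof -
    have "word_op Sa (rev K) (\<lambda>_. 0) = (\<lambda>_. 0)" using words_set[OF K] by (intro wSa_zero) simp
    thus ?thesis using wS_zero[OF words_set[OF sig_w[OF K]]] by simp
  qed
  thus "u_op N l \<sigma> S Sa (\<lambda>_. 0) x = 0" unfolding u_op_def by simp
qed

lemma u_adj_0: "u_adj N l \<sigma> S Sa (\<lambda>_. 0) = (\<lambda>_. 0)"
proof
  fix x
  have "word_op S K (word_op Sa (rev (\<sigma> K)) (\<lambda>_. 0)) x = 0" if K: "K \<in> words N l" for K
  proof -
    have "word_op Sa (rev (\<sigma> K)) (\<lambda>_. 0) = (\<lambda>_. 0)" using words_set[OF sig_w[OF K]] by (intro wSa_zero) simp
    thus ?thesis using wS_zero[OF words_set[OF K]] by simp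
  qed
  thus "u_adj N l \<sigma> S Sa (\<lambda>_. 0) x = 0" unfolding u_adj_def by simp
qed

abbreviation T where "T \<equiv> psi_S N l \<sigma> S Sa"
abbreviation Ts where "Ts \<equiv> psi_Sa N l \<sigma> S Sa"

lemma T_B: "i \<in> {1..N} \<Longrightarrow> b \<in> B \<Longrightarrow> T i b = U (S i b)"
  unfolding psi_S_def using u_op_B S_B by simp

lemma Ts_B: "i \<in> {1..N} \<Longrightarrow> b \<in> B \<Longrightarrow> Ts i b = Sa i (U' b)"
  unfolding psi_Sa_def using u_adj_B by simp

lemma T_0: "i \<in> {1..N} \<Longrightarrow> T i (\<lambda>_. 0) = (\<lambda>_. 0)"
  unfolding psi_S_def using u_op_0 S_zero by simp

lemma Ts_0: "i \<in> {1..N} \<Longrightarrow> Ts i (\<lambda>_. 0) = (\<lambda>_. 0)"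
  unfolding psi_Sa_def using u_adj_0 Sa_zero by simp

definition \<alpha> where "\<alpha> b = fl (U' b)"
definition \<tau> where "\<tau> b = pred (U' b)"

lemma \<alpha>_range: "b \<in> B \<Longrightarrow> \<alpha> b \<in> {1..N}" unfolding \<alpha>_def using fl_pred U'_B by blast
lemma \<tau>_B: "b \<in> B \<Longrightarrow> \<tau> b \<in> B" unfolding \<tau>_def using fl_pred U'_B by blast

lemma T_\<alpha>\<tau>: assumes "b \<in> B" shows "T (\<alpha> b) (\<tau> b) = b"
proof -
  have "T (\<alpha> b) (\<tau> b) = U (S (\<alpha> b) (\<tau> b))" using T_B[OF \<alpha>_range[OF assms] \<tau>_B[OF assms]] .
  also have "S (\<alpha> b) (\<tau> b) = U' b" unfolding \<alpha>_def \<tau>_def using fl_pred(3)[OF U'_B[OF assms]] by simp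
  finally show ?thesis using U_U'[OF assms] by simp
qed

lemma T_in_B: "i \<in> {1..N} \<Longrightarrow> b \<in> B \<Longrightarrow> T i b \<in> B"
  using T_B U_B S_B by simp

lemma \<tau>_T: "i \<in> {1..N} \<Longrightarrow> b \<in> B \<Longrightarrow> \<tau> (T i b) = b"
  unfolding \<tau>_def using T_B U'_U S_B S_fl_pred by simp

lemma \<alpha>_T: "i \<in> {1..N} \<Longrightarrow> b \<in> B \<Longrightarrow> \<alpha> (T i b) = i"
  unfolding \<alpha>_def using T_B U'_U S_B S_fl_pred by simp

lemma Ts_form: "i \<in> {1..N} \<Longrightarrow> b \<in> B \<Longrightarrow> Ts i b = (if i = \<alpha> b then \<tau> b else (\<lambda>_. 0))"
  unfolding \<alpha>_def \<tau>_def using Ts_B Sa_B U'_B by simp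

end

context cyc begin

fun path :: "nat \<Rightarrow> ('a \<Rightarrow> complex) \<Rightarrow> nat list" where
  "path 0 b = []"
| "path (Suc n) b = \<alpha> b # path n (\<tau> b)"

lemma tau_B: "b \<in> B \<Longrightarrow> (\<tau> ^^ n) b \<in> B"
  by (induction n) (auto intro: \<tau>_B)

lemma path_set: "b \<in> B \<Longrightarrow> set (path n b) \<subseteq> {1..N}"
  by (induction n arbitrary: b) (auto dest: \<alpha>_range \<tau>_B)

lemma path_len: "length (path n b) = n"
  by (induction n arbitrary: b) auto

lemma path_recon: "b \<in> B \<Longrightarrow> word_op T (path n b) ((\<tau> ^^ n) b) = b"
proof (induction n arbitrary: b)
  case 0 then show ?case by simp
next
  case (Suc n)
  have "word_op T (path (Suc n) b) ((\<tau> ^^ Suc n) b) = T (\<alpha> b) (word_op T (path n (\<tau> b)) ((\<tau> ^^ n) (\<tau> b)))"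
    by (simp add: funpow_Suc_right del: funpow.simps)
  also have "\<dots> = T (\<alpha> b) (\<tau> b)" using Suc.IH[OF \<tau>_B[OF Suc.prems]] by simp
  also have "\<dots> = b" using T_\<alpha>\<tau>[OF Suc.prems] .
  finally show ?case .
qed

lemma path_drop: "q \<le> n \<Longrightarrow> drop q (path n b) = path (n - q) ((\<tau> ^^ q) b)"
proof (induction q arbitrary: n b)
  case 0 then show ?case by simp
next
  case (Suc q)
  then obtain n' where n: "n = Suc n'" by (cases n) auto
  have "drop (Suc q) (path n b) = drop q (path n' (\<tau> b))" using n by simp
  also have "\<dots> = path (n' - q) ((\<tau> ^^ q) (\<tau> b))" using Suc n by simp
  also have "\<dots> = path (n - Suc q) ((\<tau> ^^ Suc q) b)" using n by (simp add: funpow_Suc_right del: funpow.simps)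
  finally show ?case .
qed

lemma om_expand: "c < k \<Longrightarrow> \<exists>V c'. c' < k \<and> length V = n \<and> set V \<subseteq> {1..N} \<and> om c = word_op S V (om c')"
proof (induction n)
  case 0 then show ?case by (intro exI[of _ "[]"] exI[of _ c]) simp
next
  case (Suc n)
  then obtain V c' where V: "c' < k" "length V = n" "set V \<subseteq> {1..N}" "om c = word_op S V (om c')" by blast
  have "om c = word_op S (V @ [J ! c']) (om (nxt c'))" using V om_step[OF V(1)] by (simp add: word_op_append)
  moreover have "set (V @ [J ! c']) \<subseteq> {1..N}" using V Jc by auto
  ultimately show ?case using nxt_lt V by (intro exI[of _ "V @ [J ! c']"] exI[of _ "nxt c'"]) auto
qed

lemma \<tau>_rep:
  assumes W: "set W \<subseteq> {1..N}" "length W \<ge> l" and c: "c < k"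
  shows "\<exists>W'. set W' \<subseteq> {1..N} \<and> length W' = length W - 1 \<and> \<tau> (word_op S W (om c)) = word_op S W' (om c)"
proof -
  define K where "K = take l W"
  define R where "R = drop l W"
  have KR: "W = K @ R" unfolding K_def R_def by simp
  have Kw: "K \<in> words N l" unfolding words_def K_def using W by (auto dest: in_set_takeD)
  have Rs: "set R \<subseteq> {1..N}" unfolding R_def using W by (auto dest: in_set_dropD)
  define r where "r = word_op S R (om c)"
  have rB: "r \<in> B" unfolding r_def using Rs c by (intro B_intro)
  define b where "b = word_op S W (om c)"
  have b: "b = word_op S K r" unfolding b_def r_def KR by (simp add: word_op_append)
  have fwb: "fw l b = K" using fw_S'[OF words_set[OF Kw] rB] words_len[OF Kw] b by simp
  have pb: "predn l b = r" using predn_S[OF words_set[OF Kw] rB] words_len[OF Kw] b by simp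
  have sw: "sig' K \<in> words N l" using sig'_w[OF Kw] .
  then obtain y ys where yys: "sig' K = y # ys" using l1 by (cases "sig' K") (auto simp: words_def)
  have y: "y \<in> {1..N}" and ys: "set ys \<subseteq> {1..N}" and lys: "length ys = l - 1"
    using sw yys by (auto simp: words_def)
  have ysr: "word_op S ys r \<in> B" using wS_B[OF ys rB] .
  have "U' b = S y (word_op S ys r)" unfolding U'_def fwb pb yys by simp
  hence "\<tau> b = word_op S ys r" unfolding \<tau>_def using S_fl_pred(2)[OF y ysr] by simp
  also have "\<dots> = word_op S (ys @ R) (om c)" unfolding r_def by (simp add: word_op_append)
  finally have "\<tau> b = word_op S (ys @ R) (om c)" .
  moreover have "set (ys @ R) \<subseteq> {1..N}" using ys Rs by auto
  moreover have "length (ys @ R) = length W - 1" using lys W(2) l1 unfolding R_def by auto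
  ultimately show ?thesis unfolding b_def by blast
qed

definition F where "F = {word_op S W (om c) | W c. set W \<subseteq> {1..N} \<and> length W \<le> l - 1 \<and> c < k}"

lemma F_B: "F \<subseteq> B" unfolding F_def B_def by blast

lemma finite_F: "finite F"
proof -
  have "F = (\<lambda>(W, c). word_op S W (om c)) ` ({W. set W \<subseteq> {1..N} \<and> length W \<le> l - 1} \<times> {..<k})"
    unfolding F_def by auto
  thus ?thesis using finite_lists_length_le[of "{1..N}" "l - 1"] by simp
qed

lemma \<tau>_F: assumes "b \<in> F" shows "\<tau> b \<in> F"
proof -
  obtain W c where b: "b = word_op S W (om c)" "set W \<subseteq> {1..N}" "length W \<le> l - 1" "c < k"
    using assms unfolding F_def by blast
  obtain V c' where V: "c' < k" "length V = l - length W" "set V \<subseteq> {1..N}" "om c = word_op S V (om c')"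
    using om_expand[OF b(4)] by blast
  have b2: "b = word_op S (W @ V) (om c')" using b V by (simp add: word_op_append)
  obtain W' where W': "set W' \<subseteq> {1..N}" "length W' = length (W @ V) - 1" "\<tau> b = word_op S W' (om c')"
    using \<tau>_rep[of "W @ V" c'] b V b2 by auto
  have "length W' \<le> l - 1" using W' V b(3) l1 by auto
  thus ?thesis using W' V unfolding F_def by blast
qed

lemma tau_F: "b \<in> F \<Longrightarrow> (\<tau> ^^ n) b \<in> F"
  by (induction n) (auto intro: \<tau>_F)

lemma reach_F: assumes "b \<in> B" shows "\<exists>n. (\<tau> ^^ n) b \<in> F"
proof -
  have "\<And>W c. set W \<subseteq> {1..N} \<Longrightarrow> c < k \<Longrightarrow> \<exists>n. (\<tau> ^^ n) (word_op S W (om c)) \<in> F"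
  proof -
    fix W c
    show "set W \<subseteq> {1..N} \<Longrightarrow> c < k \<Longrightarrow> \<exists>n. (\<tau> ^^ n) (word_op S W (om c)) \<in> F"
    proof (induction "length W" arbitrary: W rule: less_induct)
      case less
      show ?case
      proof (cases "length W \<le> l - 1")
        case True
        then show ?thesis using less.prems unfolding F_def by (intro exI[of _ 0]) auto
      next
        case False
        have lW: "l \<le> length W" using False l1 by auto
        obtain W' where W': "set W' \<subseteq> {1..N}" "length W' = length W - 1"
            "\<tau> (word_op S W (om c)) = word_op S W' (om c)"
          using \<tau>_rep[OF less.prems(1) lW less.prems(2)] by blast
        have "length W' < length W" using W' False by auto
        then obtain n where "(\<tau> ^^ n) (word_op S W' (om c)) \<in> F" using less.hyps W'(1) less.prems(2) by blast
        thus ?thesis using W'(3) by (intro exI[of _ "Suc n"]) (simp add: funpow_Suc_right del: funpow.simps)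
      qed
    qed
  qed
  thus ?thesis using assms unfolding B_def by blast
qed

definition rel where "rel b b' \<longleftrightarrow> b \<in> B \<and> b' \<in> B \<and> (\<exists>n m. (\<tau> ^^ n) b = (\<tau> ^^ m) b')"

lemma funpow_comp: "(f ^^ p) ((f ^^ n) x) = (f ^^ (p + n)) x"
  by (simp add: funpow_add)

lemma rel_refl: "b \<in> B \<Longrightarrow> rel b b" unfolding rel_def by blast
lemma rel_sym: "rel b b' \<Longrightarrow> rel b' b" unfolding rel_def by metis
lemma rel_trans: assumes "rel b b'" "rel b' b''" shows "rel b b''"
proof -
  obtain n m where nm: "(\<tau> ^^ n) b = (\<tau> ^^ m) b'" using assms(1) unfolding rel_def by blast
  obtain p q where pq: "(\<tau> ^^ p) b' = (\<tau> ^^ q) b''" using assms(2) unfolding rel_def by blast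
  have "(\<tau> ^^ (p + n)) b = (\<tau> ^^ p) ((\<tau> ^^ n) b)" by (simp add: funpow_comp)
  also have "\<dots> = (\<tau> ^^ (p + m)) b'" using nm by (simp add: funpow_comp)
  also have "\<dots> = (\<tau> ^^ m) ((\<tau> ^^ p) b')" by (simp add: funpow_comp add.commute)
  also have "\<dots> = (\<tau> ^^ (m + q)) b''" using pq by (simp add: funpow_comp)
  finally show ?thesis using assms unfolding rel_def by blast
qed

lemma rel_taun: assumes "b \<in> B" shows "rel b ((\<tau> ^^ n) b)"
proof -
  have "(\<tau> ^^ n) b = (\<tau> ^^ 0) ((\<tau> ^^ n) b)" by simp
  thus ?thesis unfolding rel_def using tau_B[OF assms] assms by blast
qed

lemma rel_tau: "b \<in> B \<Longrightarrow> rel b (\<tau> b)"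
  using rel_taun[of b 1] by simp

definition cls where "cls b = {b'. rel b b'}"

lemma cls_B: "cls b \<subseteq> B" unfolding cls_def rel_def by blast

lemma cls_eq: "rel b b' \<Longrightarrow> cls b = cls b'"
  unfolding cls_def using rel_trans rel_sym by blast

lemma cls_self: "b \<in> B \<Longrightarrow> b \<in> cls b" unfolding cls_def using rel_refl by blast

definition Cls where "Cls = cls ` B"

lemma finite_Cls: "finite Cls"
proof -
  have "Cls \<subseteq> cls ` F"
  proof
    fix C assume "C \<in> Cls"
    then obtain b where b: "b \<in> B" "C = cls b" unfolding Cls_def by blast
    then obtain n where "(\<tau> ^^ n) b \<in> F" using reach_F by blast
    moreover have "cls b = cls ((\<tau> ^^ n) b)" using cls_eq[OF rel_taun[OF b(1)]] .
    ultimately show "C \<in> cls ` F" using b by blast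
  qed
  thus ?thesis using finite_F finite_surj by blast
qed

lemma cycle_exists: assumes "b \<in> B" shows "\<exists>z. rel b z \<and> (\<exists>p>0. (\<tau> ^^ p) z = z)"
proof -
  obtain n where n: "(\<tau> ^^ n) b \<in> F" using reach_F[OF assms] by blast
  define b0 where "b0 = (\<tau> ^^ n) b"
  define g where "g j = (\<tau> ^^ j) b0" for j
  have gF: "g ` {0..card F} \<subseteq> F" unfolding g_def b0_def using tau_F[OF n] by auto
  have "\<not> inj_on g {0..card F}"
  proof
    assume "inj_on g {0..card F}"
    hence "card {0..card F} \<le> card F" using card_inj_on_le[OF _ gF finite_F] by blast
    thus False by simp
  qed
  then obtain i j where ij: "i \<in> {0..card F}" "j \<in> {0..card F}" "i \<noteq> j" "g i = g j"
    unfolding inj_on_def by blast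
  have "\<exists>i j. i < j \<and> g i = g j" using ij by (metis linorder_neqE_nat)
  then obtain i j where ij: "i < j" "g i = g j" by blast
  define z where "z = g i"
  have "(\<tau> ^^ (j - i)) z = g j" unfolding z_def g_def using ij(1) by (simp add: funpow_comp)
  hence "(\<tau> ^^ (j - i)) z = z" using ij(2) unfolding z_def by simp
  moreover have "rel b z" unfolding z_def g_def b0_def using rel_taun[OF assms, of "i + n"]
    by (simp add: funpow_comp)
  ultimately show ?thesis using ij(1) by (intro exI[of _ z] conjI exI[of _ "j - i"]) auto
qed

definition per where "per z = (LEAST p. p > 0 \<and> (\<tau> ^^ p) z = z)"

lemma per_props:
  assumes "\<exists>p>0. (\<tau> ^^ p) z = z"
  shows "per z > 0" "(\<tau> ^^ per z) z = z" "\<And>q. 0 < q \<Longrightarrow> q < per z \<Longrightarrow> (\<tau> ^^ q) z \<noteq> z"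
proof -
  have "per z > 0 \<and> (\<tau> ^^ per z) z = z" unfolding per_def using assms by (rule LeastI_ex)
  thus "per z > 0" "(\<tau> ^^ per z) z = z" by auto
  show "\<And>q. 0 < q \<Longrightarrow> q < per z \<Longrightarrow> (\<tau> ^^ q) z \<noteq> z"
    unfolding per_def using not_less_Least by blast
qed

lemma per_distinct:
  assumes "\<exists>p>0. (\<tau> ^^ p) z = z" "i < per z" "j < per z" "(\<tau> ^^ i) z = (\<tau> ^^ j) z"
  shows "i = j"
proof (rule ccontr)
  assume "i \<noteq> j"
  have key: "False" if ij: "a < b" "b < per z" "(\<tau> ^^ a) z = (\<tau> ^^ b) z" for a b
  proof -
    have "(\<tau> ^^ (per z - b + a)) z = (\<tau> ^^ (per z - b)) ((\<tau> ^^ a) z)" by (simp add: funpow_comp)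
    also have "\<dots> = (\<tau> ^^ (per z - b)) ((\<tau> ^^ b) z)" using ij by simp
    also have "\<dots> = (\<tau> ^^ per z) z" using ij by (simp add: funpow_comp)
    also have "\<dots> = z" using per_props(2)[OF assms(1)] .
    finally have eq: "(\<tau> ^^ (per z - b + a)) z = z" .
    have q: "0 < per z - b + a" "per z - b + a < per z" using ij by auto
    show False using per_props(3)[OF assms(1) q] eq by blast
  qed
  show False
  proof (cases "i < j")
    case True then show ?thesis using key assms by blast
  next
    case False then show ?thesis using key assms \<open>i \<noteq> j\<close> by (metis linorder_neqE_nat)
  qed
qed

lemma periodic: "(\<tau> ^^ p) z = z \<Longrightarrow> (\<tau> ^^ (p * q)) z = z"
proof (induction q)
  case 0 then show ?case by simp
next
  case (Suc q)
  have "(\<tau> ^^ (p * Suc q)) z = (\<tau> ^^ p) ((\<tau> ^^ (p * q)) z)" by (simp add: funpow_comp)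
  then show ?case using Suc by simp
qed

lemma cls_word:
  assumes z: "z \<in> B" "p > 0" "(\<tau> ^^ p) z = z" and b: "b \<in> cls z"
  shows "\<exists>I. set I \<subseteq> {1..N} \<and> b = word_op T I z"
proof -
  have r: "rel z b" using b unfolding cls_def by blast
  then obtain n m where nm: "(\<tau> ^^ n) z = (\<tau> ^^ m) b" unfolding rel_def by blast
  have bB: "b \<in> B" using r unfolding rel_def by blast
  define t where "t = (p - 1) * n"
  have tn: "t + n = p * n" unfolding t_def using z(2) by (cases p) auto
  have "(\<tau> ^^ (t + m)) b = (\<tau> ^^ t) ((\<tau> ^^ m) b)" by (simp add: funpow_comp)
  also have "\<dots> = (\<tau> ^^ t) ((\<tau> ^^ n) z)" using nm by simp
  also have "\<dots> = (\<tau> ^^ (t + n)) z" by (simp add: funpow_comp)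
  also have "\<dots> = z" using periodic[OF z(3)] tn by simp
  finally have "(\<tau> ^^ (t + m)) b = z" .
  hence "b = word_op T (path (t + m) b) z" using path_recon[OF bB, of "t + m"] by simp
  thus ?thesis using path_set[OF bB] by blast
qed

lemma T_cls: assumes "i \<in> {1..N}" "x \<in> insert (\<lambda>_. 0) (cls z)" shows "T i x \<in> insert (\<lambda>_. 0) (cls z)"
proof (cases "x = (\<lambda>_. 0)")
  case True then show ?thesis using T_0[OF assms(1)] by simp
next
  case False
  hence x: "x \<in> cls z" using assms by auto
  have xB: "x \<in> B" using x cls_B by blast
  have "rel x (T i x)" using rel_tau[OF T_in_B[OF assms(1) xB]] \<tau>_T[OF assms(1) xB] rel_sym by metis
  hence "rel z (T i x)" using x rel_trans unfolding cls_def by blast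
  thus ?thesis unfolding cls_def by blast
qed

lemma Ts_cls: assumes "i \<in> {1..N}" "x \<in> insert (\<lambda>_. 0) (cls z)" shows "Ts i x \<in> insert (\<lambda>_. 0) (cls z)"
proof (cases "x = (\<lambda>_. 0)")
  case True then show ?thesis using Ts_0[OF assms(1)] by simp
next
  case False
  hence x: "x \<in> cls z" using assms by auto
  have xB: "x \<in> B" using x cls_B by blast
  have "rel z (\<tau> x)" using rel_tau[OF xB] x rel_trans unfolding cls_def by blast
  thus ?thesis using Ts_form[OF assms(1) xB] unfolding cls_def by auto
qed

lemma wT_cls: "set I \<subseteq> {1..N} \<Longrightarrow> x \<in> insert (\<lambda>_. 0) (cls z) \<Longrightarrow> word_op T I x \<in> insert (\<lambda>_. 0) (cls z)"
proof (induction I)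
  case (Cons a I)
  have "word_op T I x \<in> insert (\<lambda>_. 0) (cls z)" using Cons by simp
  moreover have "a \<in> {1..N}" using Cons.prems(1) by simp
  ultimately show ?case using T_cls by simp
qed simp

lemma wTs_cls: "set I \<subseteq> {1..N} \<Longrightarrow> x \<in> insert (\<lambda>_. 0) (cls z) \<Longrightarrow> word_op Ts I x \<in> insert (\<lambda>_. 0) (cls z)"
proof (induction I)
  case (Cons a I)
  have "word_op Ts I x \<in> insert (\<lambda>_. 0) (cls z)" using Cons by simp
  moreover have "a \<in> {1..N}" using Cons.prems(1) by simp
  ultimately show ?case using Ts_cls by simp
qed simp

end

context cyc begin

lemma nf_B: "b \<in> B \<Longrightarrow> nf b = 1"
  using B_norm cinner_self by (metis of_real_eq_1_iff)

lemma l2norm_B: "b \<in> B \<Longrightarrow> l2norm b = 1"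
  by (simp add: l2norm_nf nf_B)

lemma T_path_drop:
  assumes z: "z \<in> B" "(\<tau> ^^ p) z = z" and q: "q \<le> p"
  shows "word_op T (drop q (path p z)) z = (\<tau> ^^ q) z"
proof -
  have "drop q (path p z) = path (p - q) ((\<tau> ^^ q) z)" using path_drop[OF q] .
  moreover have "(\<tau> ^^ (p - q)) ((\<tau> ^^ q) z) = z" using z(2) q by (simp add: funpow_comp)
  ultimately show ?thesis using path_recon[OF tau_B[OF z(1)], of "p - q" q] by simp
qed

lemma is_P_cls:
  assumes z: "z \<in> B" and cy: "\<exists>p>0. (\<tau> ^^ p) z = z"
  shows "is_P N T Ts (path (per z) z) (lclosure (lspan (cls z)))"
  unfolding is_P_def
proof (intro bexI conjI)
  show zin: "z \<in> lclosure (lspan (cls z))"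
    by (intro lclosure_base B_l2 z lspan_base cls_self)
  show "l2norm z = 1" using l2norm_B[OF z] .
  define G where "G = {word_op T I (word_op Ts (rev L) z) | I L. set I \<subseteq> {1..N} \<and> set L \<subseteq> {1..N}}"
  have "lspan G = lspan (cls z)"
  proof (rule lspan_between)
    show "cls z \<subseteq> G"
    proof
      fix b assume b: "b \<in> cls z"
      obtain I where I: "set I \<subseteq> {1..N}" "b = word_op T I z"
        using cls_word[OF z per_props(1,2)[OF cy] b] by blast
      show "b \<in> G" unfolding G_def
        by (rule CollectI, rule exI[of _ I], rule exI[of _ "[]"]) (use I in simp)
    qed
    show "G \<subseteq> insert (\<lambda>_. 0) (cls z)"
    proof
      fix g assume "g \<in> G"
      then obtain I L where g: "g = word_op T I (word_op Ts (rev L) z)" "set I \<subseteq> {1..N}" "set L \<subseteq> {1..N}"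
        unfolding G_def by blast
      have "word_op Ts (rev L) z \<in> insert (\<lambda>_. 0) (cls z)"
        using g(3) cls_self[OF z] by (intro wTs_cls) auto
      thus "g \<in> insert (\<lambda>_. 0) (cls z)" using wT_cls g by blast
    qed
  qed
  thus "cyclic_space N T Ts z = lclosure (lspan (cls z))"
    unfolding cyclic_space_def G_def by simp
  have pz: "(\<tau> ^^ per z) z = z" using per_props(2)[OF cy] .
  show "word_op T (path (per z) z) z = z"
    using T_path_drop[OF z pz, of 0] by simp
  show "\<forall>i\<in>{1..length (path (per z) z)}. \<forall>i'\<in>{1..length (path (per z) z)}.
        cinner (word_op T (drop (i - 1) (path (per z) z)) z) (word_op T (drop (i' - 1) (path (per z) z)) z) =
        (if i = i' then 1 else 0)"
  proof (intro ballI)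
    fix i i' assume i: "i \<in> {1..length (path (per z) z)}" and i': "i' \<in> {1..length (path (per z) z)}"
    have il: "i - 1 < per z" "i' - 1 < per z" using i i' path_len by auto
    have e: "word_op T (drop (i - 1) (path (per z) z)) z = (\<tau> ^^ (i - 1)) z"
            "word_op T (drop (i' - 1) (path (per z) z)) z = (\<tau> ^^ (i' - 1)) z"
      using T_path_drop[OF z pz] il by auto
    have "((\<tau> ^^ (i - 1)) z = (\<tau> ^^ (i' - 1)) z) \<longleftrightarrow> i = i'"
      using per_distinct[OF cy il] i i' by auto
    thus "cinner (word_op T (drop (i - 1) (path (per z) z)) z) (word_op T (drop (i' - 1) (path (per z) z)) z) =
        (if i = i' then 1 else 0)"
      unfolding e using B_on[OF tau_B[OF z] tau_B[OF z]] by simp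
  qed
qed

definition zC where "zC C = (SOME z. z \<in> C \<and> (\<exists>p>0. (\<tau> ^^ p) z = z))"

lemma zC_props: assumes "C \<in> Cls" shows "zC C \<in> C" "\<exists>p>0. (\<tau> ^^ p) (zC C) = zC C" "cls (zC C) = C" "zC C \<in> B"
proof -
  obtain b where b: "b \<in> B" "C = cls b" using assms unfolding Cls_def by blast
  obtain z where z: "rel b z" "\<exists>p>0. (\<tau> ^^ p) z = z" using cycle_exists[OF b(1)] by blast
  have "z \<in> C" using z b unfolding cls_def by blast
  hence "zC C \<in> C \<and> (\<exists>p>0. (\<tau> ^^ p) (zC C) = zC C)" unfolding zC_def using z(2)
    by (intro someI[of "\<lambda>z. z \<in> C \<and> (\<exists>p>0. (\<tau> ^^ p) z = z)"]) blast
  thus "zC C \<in> C" "\<exists>p>0. (\<tau> ^^ p) (zC C) = zC C" by auto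
  thus "cls (zC C) = C" using b cls_eq unfolding cls_def by blast
  show "zC C \<in> B" using \<open>zC C \<in> C\<close> b cls_B by blast
qed

lemma Cls_disj: assumes "C \<in> Cls" "C' \<in> Cls" "a \<in> C" "a \<in> C'" shows "C = C'"
proof -
  obtain b where b: "C = cls b" using assms unfolding Cls_def by blast
  obtain b' where b': "C' = cls b'" using assms unfolding Cls_def by blast
  have "cls b = cls a" using assms(3) b cls_eq unfolding cls_def by blast
  moreover have "cls b' = cls a" using assms(4) b' cls_eq unfolding cls_def by blast
  ultimately show ?thesis using b b' by simp
qed

lemma Union_Cls: "\<Union> Cls = B"
  unfolding Cls_def using cls_B cls_self by blast

lemma Cls_l2: "C \<in> Cls \<Longrightarrow> C \<subseteq> l2"
  unfolding Cls_def using cls_B B_l2 by blast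

lemma l2_closure_B: "l2 \<subseteq> lclosure (lspan B)"
proof -
  define G0 where "G0 = {word_op S I (word_op Sa (rev L) \<Omega>) | I L. set I \<subseteq> {1..N} \<and> set L \<subseteq> {1..N}}"
  have "G0 \<subseteq> insert (\<lambda>_. 0) B"
  proof
    fix g assume "g \<in> G0"
    then obtain I L where g: "g = word_op S I (word_op Sa (rev L) \<Omega>)" "set I \<subseteq> {1..N}" "set L \<subseteq> {1..N}"
      unfolding G0_def by blast
    have "\<Omega> \<in> B" using om_B[of 0] om0 k1 by simp
    hence "word_op Sa (rev L) \<Omega> \<in> insert (\<lambda>_. 0) B" using g(3) by (intro wSa_B) auto
    thus "g \<in> insert (\<lambda>_. 0) B" using g(1,2) wS_B wS_zero by auto
  qed
  hence "lspan G0 \<subseteq> lspan B" using lspan_mono[of G0 "insert (\<lambda>_. 0) B"] lspan_insert0 by blast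
  hence "lclosure (lspan G0) \<subseteq> lclosure (lspan B)" by (rule lclosure_mono)
  thus ?thesis using cyc unfolding cyclic_space_def G0_def by simp
qed

lemma decomposition:
  "\<exists>Js Ks. decomposes_into_cycles N T Ts (card Cls) Js Ks"
proof -
  obtain e where e: "bij_betw e {0..<card Cls} Cls" using ex_bij_betw_nat_finite[OF finite_Cls] by blast
  have eC: "e m \<in> Cls" if "m < card Cls" for m
    using bij_betw_apply[OF e] that by simp
  have einj: "e m \<noteq> e m'" if "m < card Cls" "m' < card Cls" "m \<noteq> m'" for m m'
  proof
    assume "e m = e m'"
    moreover have "inj_on e {0..<card Cls}" using e by (rule bij_betw_imp_inj_on)
    ultimately show False using that unfolding inj_on_def by simp
  qed
  define Js where "Js m = path (per (zC (e m))) (zC (e m))" for m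
  define Ks where "Ks m = lclosure (lspan (e m))" for m
  have P: "length (Js m) \<ge> 1 \<and> set (Js m) \<subseteq> {1..N} \<and> is_P N T Ts (Js m) (Ks m)" if m: "m < card Cls" for m
  proof -
    note zp = zC_props[OF eC[OF m]]
    have "per (zC (e m)) > 0" using per_props(1)[OF zp(2)] .
    hence "length (Js m) \<ge> 1" unfolding Js_def path_len by simp
    moreover have "set (Js m) \<subseteq> {1..N}" unfolding Js_def using path_set[OF zp(4)] .
    moreover have "is_P N T Ts (Js m) (Ks m)"
      using is_P_cls[OF zp(4) zp(2)] zp(3) unfolding Js_def Ks_def by simp
    ultimately show ?thesis by blast
  qed
  have orthe: "cinner a b = 0" if "m < card Cls" "m' < card Cls" "m \<noteq> m'" "a \<in> e m" "b \<in> e m'" for m m' a b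
  proof -
    have "a \<noteq> b"
    proof
      assume "a = b"
      hence "e m = e m'" using Cls_disj[OF eC[OF that(1)] eC[OF that(2)] that(4)] that(5) by simp
      thus False using einj[OF that(1-3)] by simp
    qed
    moreover have "a \<in> B" using that(4) eC[OF that(1)] Union_Cls by blast
    moreover have "b \<in> B" using that(5) eC[OF that(2)] Union_Cls by blast
    ultimately show ?thesis using B_orth by blast
  qed
  have O: "\<forall>f\<in>Ks m. \<forall>g\<in>Ks m'. cinner f g = 0" if mm: "m < card Cls" "m' < card Cls" "m \<noteq> m'" for m m'
  proof (intro ballI)
    fix f g assume f: "f \<in> Ks m" and g: "g \<in> Ks m'"
    show "cinner f g = 0"
      by (rule lclosure_orth[of "e m" "e m'"])
         (use Cls_l2[OF eC[OF mm(1)]] Cls_l2[OF eC[OF mm(2)]] orthe[OF mm] f g in \<open>simp_all add: Ks_def\<close>)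
  qed
  have D: "\<exists>fs. (\<forall>m<card Cls. fs m \<in> Ks m) \<and> f = (\<lambda>x. \<Sum>m<card Cls. fs m x)" if f: "f \<in> l2" for f
  proof -
    have "(\<Union>m<card Cls. e m) = \<Union> Cls"
      using bij_betw_imp_surj_on[OF e] by (auto simp: atLeast0LessThan)
    hence fin: "f \<in> lclosure (lspan (\<Union>m<card Cls. e m))" using f l2_closure_B Union_Cls by auto
    have A: "\<And>m. m < card Cls \<Longrightarrow> e m \<subseteq> l2" using Cls_l2 eC by blast
    have "\<exists>fs. (\<forall>m<card Cls. fs m \<in> lclosure (lspan (e m))) \<and> f = (\<lambda>x. \<Sum>m<card Cls. fs m x)"
    proof (rule decomp)
      show "\<And>m. m < card Cls \<Longrightarrow> e m \<subseteq> l2" by (rule A)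
      show "\<And>m m' a b. m < card Cls \<Longrightarrow> m' < card Cls \<Longrightarrow> m \<noteq> m' \<Longrightarrow> a \<in> e m \<Longrightarrow> b \<in> e m' \<Longrightarrow> cinner a b = 0"
        by (rule orthe)
      show "f \<in> lclosure (lspan (\<Union>m<card Cls. e m))" by (rule fin)
    qed
    then obtain fs where fs: "\<forall>m<card Cls. fs m \<in> lclosure (lspan (e m))" "f = (\<lambda>x. \<Sum>m<card Cls. fs m x)"
      by blast
    show ?thesis unfolding Ks_def using fs by blast
  qed
  have "decomposes_into_cycles N T Ts (card Cls) Js Ks"
    unfolding decomposes_into_cycles_def
  proof (intro conjI)
    show "\<forall>m<card Cls. 1 \<le> length (Js m) \<and> set (Js m) \<subseteq> {1..N} \<and> is_P N T Ts (Js m) (Ks m)"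
      using P by blast
    show "\<forall>m<card Cls. \<forall>m'<card Cls. m \<noteq> m' \<longrightarrow> (\<forall>f\<in>Ks m. \<forall>g\<in>Ks m'. cinner f g = 0)"
      using O by blast
    show "\<forall>f\<in>l2. \<exists>fs. (\<forall>m<card Cls. fs m \<in> Ks m) \<and> f = (\<lambda>x. \<Sum>m<card Cls. fs m x)"
      using D by blast
  qed
  thus ?thesis by blast
qed

abbreviation st where "st b \<equiv> fw (l - 1) b"

lemma edge: assumes b: "b \<in> B"
  shows "(st b, st (\<tau> b)) \<in> {(q, q'). \<exists>lab. (q, lab, q') \<in> mealy_edges N l \<sigma>}"
proof -
  define K where "K = st b"
  define i where "i = fl (predn (l - 1) b)"
  have lsuc: "l = Suc (l - 1)" using l1 by simp
  have fwl: "fw l b = K @ [i]" unfolding K_def i_def using fw_snoc[of "l - 1" b] lsuc by simp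
  have i: "i \<in> {1..N}" unfolding i_def using fl_pred(1)[OF predn_B[OF b]] .
  have K: "K \<in> mealy_states N l" unfolding K_def mealy_states_def using fw_words[OF b] .
  have sw: "sig' (fw l b) \<in> words N l" using sig'_w[OF fw_words[OF b]] .
  then obtain y ys where yys: "sig' (fw l b) = y # ys" using l1 by (cases "sig' (fw l b)") (auto simp: words_def)
  have y: "y \<in> {1..N}" and ys: "set ys \<subseteq> {1..N}" and lys: "length ys = l - 1"
    using sw yys by (auto simp: words_def)
  define r where "r = predn l b"
  have rB: "r \<in> B" unfolding r_def using predn_B[OF b] .
  have ysr: "word_op S ys r \<in> B" using wS_B[OF ys rB] .
  have "U' b = S y (word_op S ys r)" unfolding U'_def r_def yys by simp
  hence "\<tau> b = word_op S ys r" unfolding \<tau>_def using S_fl_pred(2)[OF y ysr] by simp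
  hence "st (\<tau> b) = ys" using fw_S'[OF ys rB] lys by simp
  also have "ys = mealy_delta N l \<sigma> K i" unfolding mealy_delta_def sig'_def[symmetric] fwl[symmetric] yys by simp
  finally have "st (\<tau> b) = mealy_delta N l \<sigma> K i" .
  hence "(K, (i, mealy_lambda N l \<sigma> K i), st (\<tau> b)) \<in> mealy_edges N l \<sigma>"
    unfolding mealy_edges_def using K i by blast
  thus ?thesis unfolding K_def by blast
qed

definition Rm where "Rm = (let E = {(q, q'). \<exists>lab. (q, lab, q') \<in> mealy_edges N l \<sigma>} in E \<union> E\<inverse>)"

lemma conn_eq: "mealy_conn N l \<sigma> = Rm\<^sup>* \<inter> (mealy_states N l \<times> mealy_states N l)"
  unfolding mealy_conn_def Rm_def Let_def by simp

lemma Rm_sym: "(a, c) \<in> Rm\<^sup>* \<Longrightarrow> (c, a) \<in> Rm\<^sup>*"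
proof -
  assume "(a, c) \<in> Rm\<^sup>*"
  hence "(c, a) \<in> (Rm\<inverse>)\<^sup>*" by (rule rtrancl_converseI)
  moreover have "Rm\<inverse> = Rm" unfolding Rm_def Let_def by auto
  ultimately show "(c, a) \<in> Rm\<^sup>*" by simp
qed

lemma st_path: "b \<in> B \<Longrightarrow> (st b, st ((\<tau> ^^ n) b)) \<in> Rm\<^sup>*"
proof (induction n)
  case 0 then show ?case by simp
next
  case (Suc n)
  have "(st ((\<tau> ^^ n) b), st (\<tau> ((\<tau> ^^ n) b))) \<in> Rm"
    using edge[OF tau_B[OF Suc.prems]] unfolding Rm_def Let_def by blast
  then show ?case using Suc by (simp add: rtrancl_into_rtrancl)
qed

lemma st_states: "b \<in> B \<Longrightarrow> st b \<in> mealy_states N l"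
  unfolding mealy_states_def using fw_words by blast

lemma rel_conn: assumes "rel b b'" shows "(st b, st b') \<in> mealy_conn N l \<sigma>"
proof -
  obtain n m where nm: "(\<tau> ^^ n) b = (\<tau> ^^ m) b'" and bb: "b \<in> B" "b' \<in> B" using assms unfolding rel_def by blast
  have "(st b, st ((\<tau> ^^ n) b)) \<in> Rm\<^sup>*" using st_path[OF bb(1)] .
  moreover have "(st ((\<tau> ^^ n) b), st b') \<in> Rm\<^sup>*" using Rm_sym[OF st_path[OF bb(2), of m]] nm by simp
  ultimately have "(st b, st b') \<in> Rm\<^sup>*" by (rule rtrancl_trans)
  thus ?thesis unfolding conn_eq using st_states bb by blast
qed

lemma conn_img: assumes "(q, q') \<in> mealy_conn N l \<sigma>" shows "mealy_conn N l \<sigma> `` {q} = mealy_conn N l \<sigma> `` {q'}"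
proof -
  have qq: "(q, q') \<in> Rm\<^sup>*" "q \<in> mealy_states N l" "q' \<in> mealy_states N l" using assms unfolding conn_eq by auto
  have "(q', q) \<in> Rm\<^sup>*" using Rm_sym[OF qq(1)] .
  thus ?thesis using qq unfolding conn_eq by (auto intro: rtrancl_trans)
qed

lemma count: "mealy_num_components N l \<sigma> \<le> card Cls"
proof -
  define gm where "gm C = mealy_conn N l \<sigma> `` {st (zC C)}" for C
  have "mealy_states N l // mealy_conn N l \<sigma> \<subseteq> gm ` Cls"
  proof
    fix Q assume "Q \<in> mealy_states N l // mealy_conn N l \<sigma>"
    then obtain q where q: "q \<in> mealy_states N l" "Q = mealy_conn N l \<sigma> `` {q}" unfolding quotient_def by blast
    have qw: "q \<in> words N (l - 1)" using q(1) unfolding mealy_states_def .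
    define b0 where "b0 = word_op S q (om 0)"
    have b0: "b0 \<in> B" unfolding b0_def using words_set[OF qw] k1 by (intro B_intro) auto
    have stb0: "st b0 = q" unfolding b0_def using fw_S'[OF words_set[OF qw] om_B] words_len[OF qw] k1 by simp
    have C: "cls b0 \<in> Cls" unfolding Cls_def using b0 by blast
    have "zC (cls b0) \<in> cls b0" using zC_props(1)[OF C] .
    hence "rel b0 (zC (cls b0))" unfolding cls_def by blast
    hence "(q, st (zC (cls b0))) \<in> mealy_conn N l \<sigma>" using rel_conn stb0 by metis
    hence "Q = gm (cls b0)" unfolding gm_def q(2) by (rule conn_img)
    thus "Q \<in> gm ` Cls" using C by blast
  qed
  hence "card (mealy_states N l // mealy_conn N l \<sigma>) \<le> card (gm ` Cls)"
    by (intro card_mono finite_imageI finite_Cls)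
  also have "\<dots> \<le> card Cls" by (rule card_image_le[OF finite_Cls])
  finally show ?thesis unfolding mealy_num_components_def .
qed

end


theorem proposition3p2:
  fixes N l M k :: nat and \<sigma> :: "nat list \<Rightarrow> nat list" and J :: "nat list"
    and S Sa :: "nat \<Rightarrow> ('a \<Rightarrow> complex) \<Rightarrow> ('a \<Rightarrow> complex)"
  assumes "N \<ge> 2" and "l \<ge> 1"
    and "bij_betw \<sigma> (words N l) (words N l)"
    and "M = mealy_num_components N l \<sigma>"
    and "k \<ge> 1" and "J \<in> words N k"
    and "cuntz_rep N S Sa" and "is_P N S Sa J l2"
  shows "\<exists>M' Js Ks. M' \<ge> M \<and>
           decomposes_into_cycles N (psi_S N l \<sigma> S Sa) (psi_Sa N l \<sigma> S Sa) M' Js Ks"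
proof -
  obtain \<Omega> where \<Omega>: "\<Omega> \<in> l2" "cyclic_space N S Sa \<Omega> = l2" "word_op S J \<Omega> = \<Omega>"
    "\<forall>i\<in>{1..length J}. \<forall>i'\<in>{1..length J}.
              cinner (word_op S (drop (i - 1) J) \<Omega>) (word_op S (drop (i' - 1) J) \<Omega>)
                = (if i = i' then 1 else 0)"
    using assms(8) unfolding is_P_def by blast
  interpret cyc N l \<sigma> S Sa J k \<Omega>
    using assms \<Omega> by unfold_locales auto
  obtain Js Ks where "decomposes_into_cycles N (psi_S N l \<sigma> S Sa) (psi_Sa N l \<sigma> S Sa) (card Cls) Js Ks"
    using decomposition by blast
  moreover have "M \<le> card Cls" using count assms(4) by simp
  ultimately show ?thesis by blast
qed


end
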